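(* Let $m\equiv0\pmod8$ and $\mathfrak n_m^{(p)}=(\mathfrak v_m)^p\oplus\mathbb R^m$. Then ${\rm Aut}_o(\mathfrak n_m^{(p)})$ has $p+1$ orbits in ${\rm Lag}(\mathfrak n_m^{(p)})$, of the form $O(p)/\big(O(r)\times O(p-r)\big)$, $r=0,\dots,p$; i.e. for each $r$ the corresponding orbit is an orbit of a subgroup of ${\rm Aut}_o(\mathfrak n_m^{(p)})$ isomorphic to $O(p)$, with isotropy subgroup isomorphic to $O(r)\times O(p-r)$.
   Context: $C(m)$ is the real Clifford algebra of $\mathbb R^m$ (relations $z^2=-\langle z,z\rangle1$); for $m\not\equiv3\pmod4$, $\mathfrak v_m$ is the unique irreducible $C(m)$-module up to isomorphism, with an inner product making each $J_z$ skew-symmetric, and $(\mathfrak v_m)^p$ the direct sum of $p$ copies. $\mathfrak n_m^{(p)}$ is the Lie algebra of Heisenberg type with $\mathbb R^m$ central and $\langle z,[u,v]\rangle=(J_zu,v)$. ${\rm Lag}(\mathfrak n)$ is the set of subspaces $\mathcal L$ of $\mathfrak v=(\mathfrak v_m)^p$ with $[\mathcal L,\mathcal L]=0$, $\dim\mathcal L=\frac12\dim\mathfrak v$. ${\rm Aut}_o(\mathfrak n)$ is the group of linear automorphisms $\xi$ of $\mathfrak v$ with $[\xi u,\xi v]=[u,v]$. Notation $A/B$ for an orbit: an orbit of a subgroup $A$ of ${\rm Aut}_o(\mathfrak n)$ with isotropy subgroup $B$. *)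

theory Defs
  imports "HOL-Analysis.Analysis" "HOL-Algebra.Group"
begin

definition clifford_module :: "('z::euclidean_space \<Rightarrow> 'v::euclidean_space \<Rightarrow> 'v) \<Rightarrow> bool" where
  "clifford_module J \<longleftrightarrow>
     (\<forall>z. linear (J z)) \<and> (\<forall>v. linear (\<lambda>z. J z v)) \<and>
     (\<forall>z v. J z (J z v) = - (z \<bullet> z) *\<^sub>R v) \<and>
     (\<forall>z u v. (J z u) \<bullet> v = - (u \<bullet> (J z v)))"

definition invariant_subspace :: "('z::euclidean_space \<Rightarrow> 'v::euclidean_space \<Rightarrow> 'v) \<Rightarrow> 'v set \<Rightarrow> bool" where
  "invariant_subspace J W \<longleftrightarrow> subspace W \<and> (\<forall>z. J z ` W \<subseteq> W)"

definition irreducible_submodule :: "('z::euclidean_space \<Rightarrow> 'v::euclidean_space \<Rightarrow> 'v) \<Rightarrow> 'v set \<Rightarrow> bool" where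
  "irreducible_submodule J W \<longleftrightarrow> invariant_subspace J W \<and> W \<noteq> {0} \<and>
     (\<forall>U. invariant_subspace J U \<and> U \<subseteq> W \<longrightarrow> U = {0} \<or> U = W)"

definition sum_of_irreducibles :: "('z::euclidean_space \<Rightarrow> 'v::euclidean_space \<Rightarrow> 'v) \<Rightarrow> nat \<Rightarrow> bool" where
  "sum_of_irreducibles J p \<longleftrightarrow>
     (\<exists>W :: nat \<Rightarrow> 'v set.
        (\<forall>i<p. irreducible_submodule J (W i)) \<and>
        (\<forall>i<p. \<forall>j<p. i \<noteq> j \<longrightarrow> (\<forall>u\<in>W i. \<forall>v\<in>W j. u \<bullet> v = 0)) \<and>
        span (\<Union>i<p. W i) = UNIV)"

text \<open>Lie bracket of the H-type algebra: <z,[u,v]> = (J z u, v).\<close>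
definition hbracket :: "('z::euclidean_space \<Rightarrow> 'v::euclidean_space \<Rightarrow> 'v) \<Rightarrow> 'v \<Rightarrow> 'v \<Rightarrow> 'z" where
  "hbracket J u v = (\<Sum>b\<in>Basis. ((J b u) \<bullet> v) *\<^sub>R b)"

definition Lag :: "('z::euclidean_space \<Rightarrow> 'v::euclidean_space \<Rightarrow> 'v) \<Rightarrow> 'v set set" where
  "Lag J = {L. subspace L \<and> (\<forall>u\<in>L. \<forall>v\<in>L. hbracket J u v = 0) \<and>
                2 * dim L = DIM('v)}"

definition Aut_o :: "('z::euclidean_space \<Rightarrow> 'v::euclidean_space \<Rightarrow> 'v) \<Rightarrow> ('v \<Rightarrow> 'v) set" where
  "Aut_o J = {\<xi>. linear \<xi> \<and> bij \<xi> \<and> (\<forall>u v. hbracket J (\<xi> u) (\<xi> v) = hbracket J u v)}"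

definition map_group :: "('v \<Rightarrow> 'v) set \<Rightarrow> ('v \<Rightarrow> 'v) monoid" where
  "map_group S = \<lparr>carrier = S, mult = (\<circ>), one = id\<rparr>"

definition Aut_group :: "('z::euclidean_space \<Rightarrow> 'v::euclidean_space \<Rightarrow> 'v) \<Rightarrow> ('v \<Rightarrow> 'v) monoid" where
  "Aut_group J = map_group (Aut_o J)"

definition Lag_orbits :: "('z::euclidean_space \<Rightarrow> 'v::euclidean_space \<Rightarrow> 'v) \<Rightarrow> 'v set set set" where
  "Lag_orbits J = {{\<xi> ` L | \<xi>. \<xi> \<in> Aut_o J} | L. L \<in> Lag J}"

definition mat_mult :: "nat \<Rightarrow> (nat \<Rightarrow> nat \<Rightarrow> real) \<Rightarrow> (nat \<Rightarrow> nat \<Rightarrow> real) \<Rightarrow> (nat \<Rightarrow> nat \<Rightarrow> real)" where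
  "mat_mult n A B = (\<lambda>i j. if i < n \<and> j < n then (\<Sum>k<n. A i k * B k j) else 0)"

definition mat_one :: "nat \<Rightarrow> (nat \<Rightarrow> nat \<Rightarrow> real)" where
  "mat_one n = (\<lambda>i j. if i < n \<and> j < n \<and> i = j then 1 else 0)"

definition orth_group :: "nat \<Rightarrow> (nat \<Rightarrow> nat \<Rightarrow> real) monoid" where
  "orth_group n = \<lparr>carrier = {A. (\<forall>i j. \<not> (i < n \<and> j < n) \<longrightarrow> A i j = 0) \<and>
                                  mat_mult n A (\<lambda>i j. A j i) = mat_one n},
                   mult = mat_mult n, one = mat_one n\<rparr>"

end

theory Submission
  imports Defs
begin


definition Gs :: "nat list list" where
  "Gs = [[0,1,2,3],[0,1,4,5],[0,2,4,6],[0,1,2,3,4,5,6,7]]"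
definition Fs :: "nat list list" where
  "Fs = [[3,7],[5,7],[6,7],[7]]"

definition gen :: "nat \<Rightarrow> nat \<Rightarrow> nat list" where "gen b j = map ((+) (8*b)) (Gs ! j)"
definition flip :: "nat \<Rightarrow> nat \<Rightarrow> nat list" where "flip b j = map ((+) (8*b)) (Fs ! j)"
definition gens :: "nat \<Rightarrow> nat list list" where
  "gens k = concat (map (\<lambda>b. map (gen b) [0..<4]) [0..<k])"
definition par :: "nat list \<Rightarrow> nat list \<Rightarrow> nat" where
  "par g xs = sum_list (map (count_list g) xs)"

lemma set_gens: "set (gens k) = {gen b j | b j. b < k \<and> j < 4}"
  unfolding gens_def by fastforce

lemma plus_eq_iff: "((c::nat) + a = y) = (c \<le> y \<and> a = y - c)" by auto

lemma count_map_plus: "count_list (map ((+) c) xs) (y::nat) = (if c \<le> y then count_list xs (y - c) else 0)"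
  by (induction xs) (auto simp: plus_eq_iff)

lemma lt4: "(j::nat) < 4 \<Longrightarrow> j = 0 \<or> j = 1 \<or> j = 2 \<or> j = 3" by auto
lemma lt8: "(j::nat) < 8 \<Longrightarrow> j = 0 \<or> j = 1 \<or> j = 2 \<or> j = 3 \<or> j = 4 \<or> j = 5 \<or> j = 6 \<or> j = 7" by auto

lemma Gs_lt: "j < 4 \<Longrightarrow> t \<in> set (Gs ! j) \<Longrightarrow> t < 8"
  unfolding Gs_def using lt4[of j] by auto
lemma Fs_lt: "j < 4 \<Longrightarrow> t \<in> set (Fs ! j) \<Longrightarrow> t < 8"
  unfolding Fs_def using lt4[of j] by auto

lemma count_block:
  fixes xs :: "nat list" and y b :: nat
  assumes "\<forall>t\<in>set xs. t < 8"
  shows "count_list (map ((+) (8*b)) xs) y = (if y div 8 = b then count_list xs (y mod 8) else 0)"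
proof (cases "y div 8 = b")
  case True
  hence "8*b \<le> y" "y - 8*b = y mod 8" by (auto simp: minus_div_mult_eq_mod[symmetric] mult.commute)
  thus ?thesis using True by (simp add: count_map_plus)
next
  case False
  show ?thesis
  proof (cases "8*b \<le> y")
    case True
    hence "y - 8*b \<ge> 8" using False by auto
    hence "y - 8*b \<notin> set xs" using assms by auto
    thus ?thesis using False True by (simp add: count_map_plus)
  qed (use False in \<open>auto simp: count_map_plus\<close>)
qed

lemma count_gen: "j < 4 \<Longrightarrow> count_list (gen b j) y = (if y div 8 = b then count_list (Gs ! j) (y mod 8) else 0)"
  unfolding gen_def using Gs_lt by (intro count_block) auto
lemma count_flip: "j < 4 \<Longrightarrow> count_list (flip b j) y = (if y div 8 = b then count_list (Fs ! j) (y mod 8) else 0)"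
  unfolding flip_def using Fs_lt by (intro count_block) auto

lemma par_block:
  assumes "\<forall>t\<in>set xs. t < 8" "j < 4"
  shows "par (gen b j) (map ((+) (8*b')) xs) = (if b = b' then par (Gs ! j) xs else 0)"
  using assms(1) unfolding par_def
  by (induction xs) (auto simp: count_gen[OF assms(2)])

lemma Gs_par: "j < 4 \<Longrightarrow> j' < 4 \<Longrightarrow> even (par (Gs ! j) (Gs ! j'))"
  unfolding Gs_def par_def using lt4[of j] lt4[of j'] by auto
lemma Fs_par: "j < 4 \<Longrightarrow> j' < 4 \<Longrightarrow> odd (par (Gs ! j) (Fs ! j')) \<longleftrightarrow> j = j'"
  unfolding Gs_def Fs_def par_def using lt4[of j] lt4[of j'] by auto

lemma C1: "g \<in> set (gens k) \<Longrightarrow> h \<in> set (gens k) \<Longrightarrow> even (par g h)"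
proof -
  assume "g \<in> set (gens k)" "h \<in> set (gens k)"
  then obtain b j b' j' where g: "g = gen b j" "j < 4" and h: "h = gen b' j'" "j' < 4"
    unfolding set_gens by blast
  have "par g h = (if b = b' then par (Gs ! j) (Gs ! j') else 0)"
    unfolding g h gen_def[of b'] using par_block[OF _ g(2)] Gs_lt[OF h(2)] by (simp add: gen_def)
  thus ?thesis using Gs_par[OF g(2) h(2)] by simp
qed

lemma gen_inj: assumes "j < 4" "j' < 4" "gen b j = gen b' j'" shows "b = b' \<and> j = j'"
proof -
  have h: "hd (Gs ! j) = 0" "hd (Gs ! j') = 0" "Gs ! j \<noteq> []" "Gs ! j' \<noteq> []"
    using lt4[OF assms(1)] lt4[OF assms(2)] by (auto simp: Gs_def)
  have "hd (gen b j) = 8*b" "hd (gen b' j') = 8*b'" using h by (auto simp: gen_def hd_map)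
  hence bb: "b = b'" using assms(3) by simp
  have "Gs ! j = Gs ! j'" using assms(3) unfolding gen_def bb by (simp add: inj_map_eq_map)
  hence "j = j'" using lt4[OF assms(1)] lt4[OF assms(2)] by (auto simp: Gs_def)
  thus ?thesis using bb by simp
qed

lemma C2: assumes "g \<in> set (gens k)"
  shows "length g = 4 \<or> length g = 8" "distinct g" "set g \<subseteq> {..<8*k}"
proof -
  obtain b j where g: "g = gen b j" "b < k" "j < 4" using assms unfolding set_gens by blast
  show "length g = 4 \<or> length g = 8" using lt4[OF g(3)] by (auto simp: g gen_def Gs_def)
  have "distinct (Gs ! j)" using lt4[OF g(3)] by (auto simp: Gs_def)
  thus "distinct g" by (simp add: g gen_def distinct_map)
  have "\<forall>t\<in>set (Gs ! j). 8*b + t < 8*k" using Gs_lt[OF g(3)] g(2) by fastforce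
  thus "set g \<subseteq> {..<8*k}" by (auto simp: g gen_def)
qed

lemma C3: assumes "g \<in> set (gens k)"
  shows "\<exists>fl. set fl \<subseteq> {..<8*k} \<and> (\<forall>h\<in>set (gens k). odd (par h fl) \<longleftrightarrow> h = g)"
proof -
  obtain b j where g: "g = gen b j" "b < k" "j < 4" using assms unfolding set_gens by blast
  show ?thesis
  proof (rule exI[of _ "flip b j"], intro conjI ballI)
    have "\<forall>t\<in>set (Fs ! j). 8*b + t < 8*k" using Fs_lt[OF g(3)] g(2) by fastforce
    thus "set (flip b j) \<subseteq> {..<8*k}" by (auto simp: flip_def)
    fix h assume "h \<in> set (gens k)"
    then obtain b' j' where h: "h = gen b' j'" "b' < k" "j' < 4" unfolding set_gens by blast
    have "par h (flip b j) = (if b' = b then par (Gs ! j') (Fs ! j) else 0)"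
      unfolding h flip_def using par_block[OF _ h(3)] Fs_lt[OF g(3)] by simp
    moreover have "h = g \<longleftrightarrow> b' = b \<and> j' = j" using gen_inj[OF h(3) g(3)] g h by auto
    ultimately show "odd (par h (flip b j)) \<longleftrightarrow> h = g"
      using Fs_par[OF h(3) g(3)] by simp
  qed
qed

lemma sum_list_sum_swap:
  "(\<Sum>b\<in>B. sum_list (map (f b) xs)) = sum_list (map (\<lambda>y. \<Sum>b\<in>B. f b y) xs)"
  by (induction xs) (auto simp: sum.distrib)

lemma count_distinct1: "distinct xs \<Longrightarrow> t \<in> set xs \<Longrightarrow> count_list xs t = 1"
  by (induction xs) auto

lemma G3_count: "(t::nat) < 8 \<Longrightarrow> count_list (Gs ! 3) t = 1"
proof -
  assume "t < 8"
  hence "t \<in> set [0..<8]" by simp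
  moreover have "Gs ! 3 = [0..<8]" by (simp add: Gs_def upt_rec)
  ultimately show ?thesis by (simp add: count_distinct1)
qed

lemma C5: assumes "set xs \<subseteq> {..<8*k}" "odd (length xs)"
  shows "\<exists>g\<in>set (gens k). odd (par g xs)"
proof (rule ccontr)
  assume na: "\<not> ?thesis"
  have gin: "gen b 3 \<in> set (gens k)" if "b < k" for b
    unfolding set_gens using that by (intro CollectI exI[of _ b] exI[of _ 3]) simp
  have ev: "\<forall>b<k. even (par (gen b 3) xs)" using gin na by blast
  have c3: "count_list (gen b 3) y = (if y div 8 = b then 1 else 0)" for b y
  proof -
    have "count_list (Gs ! 3) (y mod 8) = 1" by (rule G3_count) simp
    thus ?thesis using count_gen[of 3 b y] by simp
  qed
  have "(\<Sum>b<k. par (gen b 3) xs) = sum_list (map (\<lambda>y. \<Sum>b<k. count_list (gen b 3) y) xs)"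
    unfolding par_def by (rule sum_list_sum_swap)
  also have "\<dots> = sum_list (map (\<lambda>y. 1) xs)"
  proof -
    have "(\<Sum>b<k. count_list (gen b 3) y) = 1" if "y \<in> set xs" for y
    proof -
      have "y < 8 * k" using that assms(1) by auto
      hence "y div 8 < k" by (simp add: div_less_iff_less_mult mult.commute)
      thus ?thesis unfolding c3 by simp
    qed
    thus ?thesis by (intro arg_cong[where f=sum_list] map_cong) auto
  qed
  also have "\<dots> = length xs" by (induction xs) auto
  finally have eq: "(\<Sum>b<k. par (gen b 3) xs) = length xs" .
  have "even (\<Sum>b<k. par (gen b 3) xs)" by (rule dvd_sum) (use ev in auto)
  thus False using assms(2) eq by simp
qed

lemma upt4: "[0..<4] = [0::nat,1,2,3]" by (simp add: upt_rec)

definition selc :: "(nat \<Rightarrow> nat) \<Rightarrow> nat \<Rightarrow> bool" where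
  "selc c j = (if j = 3 then odd (c 7) else if j = 2 then (odd (c 6) \<noteq> odd (c 7))
     else if j = 1 then (odd (c 5) \<noteq> odd (c 7)) else (odd (c 3) \<noteq> odd (c 7)))"

lemma block_solve:
  fixes c :: "nat \<Rightarrow> nat"
  assumes "even (c 0 + c 1 + c 2 + c 3)" "even (c 0 + c 1 + c 4 + c 5)" "even (c 0 + c 2 + c 4 + c 6)"
    "even (c 0 + c 1 + c 2 + c 3 + c 4 + c 5 + c 6 + c 7)" "t < 8"
  shows "odd (sum_list (map (\<lambda>j. count_list (Gs ! j) t) (filter (selc c) [0..<4]))) \<longleftrightarrow> odd (c t)"
  using lt8[OF assms(5)] assms(1-4) unfolding upt4 selc_def Gs_def
  by (auto simp: even_add)

lemma par_distinct: "distinct g \<Longrightarrow> par g xs = sum (count_list xs) (set g)"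
proof (induction xs)
  case Nil then show ?case by (simp add: par_def)
next
  case (Cons x xs)
  have 1: "par g (x # xs) = count_list g x + par g xs" by (simp add: par_def)
  have 2: "count_list g x = (if x \<in> set g then 1 else 0)" using Cons.prems by (simp add: count_distinct1)
  have 3: "sum (count_list (x # xs)) (set g) = sum (\<lambda>t. (if x = t then 1 else 0) + count_list xs t) (set g)"
    by (intro sum.cong) auto
  have 4: "\<dots> = (if x \<in> set g then 1 else 0) + sum (count_list xs) (set g)"
    by (simp add: sum.distrib)
  show ?case using 1 2 3 4 Cons by simp
qed

lemma par_gen: assumes "j < 4" shows "par (gen b j) xs = (\<Sum>t\<in>set (Gs ! j). count_list xs (8*b + t))"
proof -
  have d: "distinct (Gs ! j)" using lt4[OF assms] by (auto simp: Gs_def)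
  have "par (gen b j) xs = sum (count_list xs) ((+) (8*b) ` set (Gs ! j))"
    using par_distinct[of "gen b j"] d by (simp add: gen_def distinct_map)
  also have "\<dots> = (\<Sum>t\<in>set (Gs ! j). count_list xs (8*b + t))"
    by (subst sum.reindex) auto
  finally show ?thesis .
qed

lemma sum_list_concat_map: "sum_list (map f (concat xss)) = sum_list (map (\<lambda>xs. sum_list (map f xs)) xss)"
  by (induction xss) auto

lemma sum_list_upt_delta:
  "sum_list (map (\<lambda>b. if y = b then (f b :: nat) else 0) [0..<k]) = (if y < k then f y else 0)"
  by (induction k) auto

lemma sum_gen_block: "\<forall>j\<in>set js. j < 4 \<Longrightarrow> sum_list (map (\<lambda>j. count_list (gen b j) y) js) =
   (if y div 8 = b then sum_list (map (\<lambda>j. count_list (Gs ! j) (y mod 8)) js) else 0)"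
  by (induction js) (auto simp: count_gen)

lemma C4:
  assumes "set xs \<subseteq> {..<8*k}" "\<forall>g\<in>set (gens k). even (par g xs)"
  shows "\<exists>gl. set gl \<subseteq> set (gens k) \<and> (\<forall>y. odd (count_list xs y) \<longleftrightarrow> odd (count_list (concat gl) y))"
proof -
  define cb where "cb b t = count_list xs (8*b + t)" for b t
  define gl where "gl = concat (map (\<lambda>b. map (gen b) (filter (selc (cb b)) [0..<4])) [0..<k])"
  have gin: "gen b j \<in> set (gens k)" if "b < k" "j < 4" for b j
    unfolding set_gens using that by blast
  have hyp: "even (\<Sum>t\<in>set (Gs ! j). cb b t)" if "b < k" "j < 4" for b j
    using assms(2) gin[OF that] par_gen[OF that(2), of b xs] unfolding cb_def by metis
  have glset: "set gl \<subseteq> set (gens k)" unfolding gl_def using gin by auto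
  have cnt: "count_list (concat gl) y = (if y div 8 < k then
      sum_list (map (\<lambda>j. count_list (Gs ! j) (y mod 8)) (filter (selc (cb (y div 8))) [0..<4])) else 0)" for y
  proof -
    have "count_list (concat gl) y = sum_list (map (\<lambda>g. count_list g y) gl)" by (simp add: count_list_concat)
    also have "\<dots> = sum_list (map (\<lambda>b. sum_list (map (\<lambda>j. count_list (gen b j) y) (filter (selc (cb b)) [0..<4]))) [0..<k])"
      unfolding gl_def sum_list_concat_map by (simp add: comp_def)
    also have "\<dots> = sum_list (map (\<lambda>b. if y div 8 = b then
        sum_list (map (\<lambda>j. count_list (Gs ! j) (y mod 8)) (filter (selc (cb b)) [0..<4])) else 0) [0..<k])"
    proof (intro arg_cong[where f=sum_list] map_cong refl)
      fix b
      have "\<forall>j\<in>set (filter (selc (cb b)) [0..<4]). j < 4" by auto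
      thus "sum_list (map (\<lambda>j. count_list (gen b j) y) (filter (selc (cb b)) [0..<4])) = (if y div 8 = b then
        sum_list (map (\<lambda>j. count_list (Gs ! j) (y mod 8)) (filter (selc (cb b)) [0..<4])) else 0)"
        by (rule sum_gen_block)
    qed
    also have "\<dots> = (if y div 8 < k then
      sum_list (map (\<lambda>j. count_list (Gs ! j) (y mod 8)) (filter (selc (cb (y div 8))) [0..<4])) else 0)"
      by (rule sum_list_upt_delta)
    finally show ?thesis .
  qed
  show ?thesis
  proof (rule exI[of _ gl], intro conjI allI glset)
    fix y
    show "odd (count_list xs y) \<longleftrightarrow> odd (count_list (concat gl) y)"
    proof (cases "y div 8 < k")
      case True
      define b where "b = y div 8"
      have b: "b < k" using True b_def by simp
      have yy: "y = 8 * b + y mod 8" unfolding b_def by simp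
      have h0: "even (cb b 0 + cb b 1 + cb b 2 + cb b 3)" using hyp[OF b, of 0] by (simp add: Gs_def add.assoc)
      have h1: "even (cb b 0 + cb b 1 + cb b 4 + cb b 5)" using hyp[OF b, of 1] by (simp add: Gs_def add.assoc)
      have h2: "even (cb b 0 + cb b 2 + cb b 4 + cb b 6)" using hyp[OF b, of 2] by (simp add: Gs_def add.assoc)
      have h3: "even (cb b 0 + cb b 1 + cb b 2 + cb b 3 + cb b 4 + cb b 5 + cb b 6 + cb b 7)"
        using hyp[OF b, of 3] by (simp add: Gs_def add.assoc)
      have "odd (count_list (concat gl) y) \<longleftrightarrow> odd (cb b (y mod 8))"
        unfolding cnt using True block_solve[OF h0 h1 h2 h3, of "y mod 8"] by (simp add: b_def)
      also have "cb b (y mod 8) = count_list xs y" unfolding cb_def using yy by simp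
      finally show ?thesis by simp
    next
      case False
      hence "y \<notin> set xs" using assms(1) by (auto simp: div_less_iff_less_mult mult.commute)
      thus ?thesis unfolding cnt using False by simp
    qed
  qed
qed


locale cliff =
  fixes J :: "'z::euclidean_space \<Rightarrow> 'v::euclidean_space \<Rightarrow> 'v" and e :: "nat \<Rightarrow> 'z" and m :: nat
  assumes cm: "clifford_module J" and e_bij: "bij_betw e {..<m} Basis"
begin

definition Jn :: "nat \<Rightarrow> 'v \<Rightarrow> 'v" where "Jn i = J (e i)"

lemma J_lin: "linear (J z)" using cm unfolding clifford_module_def by auto
lemma J_linz: "linear (\<lambda>z. J z v)" using cm unfolding clifford_module_def by auto
lemma Jn_lin: "linear (Jn i)" unfolding Jn_def by (rule J_lin)

lemma J_sq: "J z (J z v) = - (z \<bullet> z) *\<^sub>R v" using cm unfolding clifford_module_def by auto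
lemma J_skew: "(J z u) \<bullet> v = - (u \<bullet> (J z v))" using cm unfolding clifford_module_def by auto

lemma J_addz: "J (a + b) v = J a v + J b v"
  using linear_add[OF J_linz[of v]] by simp
lemma J_scalez: "J (c *\<^sub>R a) v = c *\<^sub>R J a v"
  using linear_scale[OF J_linz[of v]] by simp
lemma J_add: "J z (a + b) = J z a + J z b" using linear_add[OF J_lin] by simp
lemma J_scale: "J z (c *\<^sub>R a) = c *\<^sub>R J z a" using linear_scale[OF J_lin] by simp
lemma J_neg: "J z (- a) = - J z a" using linear_neg[OF J_lin] by simp
lemma J_diff: "J z (a - b) = J z a - J z b" using linear_diff[OF J_lin] by simp
lemma J_zero: "J z 0 = 0" using linear_0[OF J_lin] by simp

lemma e_in: "i < m \<Longrightarrow> e i \<in> Basis" using e_bij bij_betw_apply by fastforce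
lemma e_inj: "i < m \<Longrightarrow> j < m \<Longrightarrow> e i = e j \<Longrightarrow> i = j"
  using e_bij unfolding bij_betw_def inj_on_def by auto

lemma Jn_sq: "i < m \<Longrightarrow> Jn i (Jn i v) = - v"
  unfolding Jn_def using J_sq[of "e i" v] e_in[of i] by simp

lemma Jn_anti: assumes "i < m" "j < m" "i \<noteq> j"
  shows "Jn i (Jn j v) = - Jn j (Jn i v)"
proof -
  have bi: "e i \<in> Basis" and bj: "e j \<in> Basis" using assms e_in by auto
  have ne: "e i \<noteq> e j" using assms e_inj by blast
  have ij: "e i \<bullet> e j = 0" using bi bj ne by (simp add: inner_not_same_Basis)
  have "J (e i + e j) (J (e i + e j) v) = - ((e i + e j) \<bullet> (e i + e j)) *\<^sub>R v" by (rule J_sq)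
  also have "(e i + e j) \<bullet> (e i + e j) = 2" using bi bj ij
    by (simp add: inner_add_left inner_add_right inner_commute)
  finally have "J (e i + e j) (J (e i + e j) v) = - 2 *\<^sub>R v" .
  moreover have "J (e i + e j) (J (e i + e j) v) = Jn i (Jn i v) + Jn i (Jn j v) + Jn j (Jn i v) + Jn j (Jn j v)"
    unfolding Jn_def by (simp add: J_addz J_add algebra_simps)
  ultimately have "Jn i (Jn j v) + Jn j (Jn i v) = 0"
    using Jn_sq[OF assms(1), of v] Jn_sq[OF assms(2), of v] by (simp add: algebra_simps scaleR_2)
  thus ?thesis by (simp add: eq_neg_iff_add_eq_0)
qed

lemma Jn_skew: "(Jn i u) \<bullet> v = - (u \<bullet> Jn i v)" unfolding Jn_def by (rule J_skew)

lemma Jn_norm: assumes "i < m" shows "Jn i u \<bullet> Jn i v = u \<bullet> v"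
  using Jn_skew[of i u "Jn i v"] Jn_sq[OF assms] by simp

lemma Jn_add: "Jn i (a + b) = Jn i a + Jn i b" unfolding Jn_def by (rule J_add)
lemma Jn_scale: "Jn i (c *\<^sub>R a) = c *\<^sub>R Jn i a" unfolding Jn_def by (rule J_scale)
lemma Jn_neg: "Jn i (- a) = - Jn i a" unfolding Jn_def by (rule J_neg)
lemma Jn_diff: "Jn i (a - b) = Jn i a - Jn i b" unfolding Jn_def by (rule J_diff)
lemma Jn_zero: "Jn i 0 = 0" unfolding Jn_def by (rule J_zero)

lemma J_expand: "J z v = (\<Sum>i<m. (z \<bullet> e i) *\<^sub>R Jn i v)"
proof -
  have "z = (\<Sum>b\<in>Basis. (z \<bullet> b) *\<^sub>R b)" by (simp add: euclidean_representation)
  also have "\<dots> = (\<Sum>i<m. (z \<bullet> e i) *\<^sub>R e i)"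
    using sum.reindex_bij_betw[OF e_bij, of "\<lambda>b. (z \<bullet> b) *\<^sub>R b"] by simp
  finally have zz: "z = (\<Sum>i<m. (z \<bullet> e i) *\<^sub>R e i)" .
  have "J z v = J (\<Sum>i<m. (z \<bullet> e i) *\<^sub>R e i) v" using zz by simp
  also have "\<dots> = (\<Sum>i<m. J ((z \<bullet> e i) *\<^sub>R e i) v)"
    using linear_sum[OF J_linz[of v]] by simp
  also have "\<dots> = (\<Sum>i<m. (z \<bullet> e i) *\<^sub>R Jn i v)" by (simp add: J_scalez Jn_def)
  finally show ?thesis .
qed

lemma hbracket_zero_iff: "hbracket J u v = 0 \<longleftrightarrow> (\<forall>i<m. Jn i u \<bullet> v = 0)"
proof
  assume h: "hbracket J u v = 0"
  show "\<forall>i<m. Jn i u \<bullet> v = 0"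
  proof (intro allI impI)
    fix i assume "i < m"
    hence b: "e i \<in> Basis" by (rule e_in)
    have "0 = hbracket J u v \<bullet> e i" using h by simp
    also have "\<dots> = (J (e i) u \<bullet> v)" unfolding hbracket_def using b
      by (simp add: inner_sum_left inner_Basis if_distrib cong: if_cong)
    finally show "Jn i u \<bullet> v = 0" unfolding Jn_def by simp
  qed
next
  assume h: "\<forall>i<m. Jn i u \<bullet> v = 0"
  have "\<forall>b\<in>Basis. J b u \<bullet> v = 0"
  proof
    fix b :: 'z assume "b \<in> Basis"
    then obtain i where "i < m" "b = e i" using e_bij unfolding bij_betw_def by auto
    thus "J b u \<bullet> v = 0" using h unfolding Jn_def by auto
  qed
  thus "hbracket J u v = 0" unfolding hbracket_def by simp
qed

primrec pr :: "nat list \<Rightarrow> 'v \<Rightarrow> 'v" where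
  "pr [] v = v"
| "pr (i # xs) v = Jn i (pr xs v)"

lemma pr_append: "pr (xs @ ys) v = pr xs (pr ys v)" by (induction xs) auto

lemma pr_lin: "linear (pr xs)"
proof (induction xs)
  case Nil then show ?case by (simp add: linear_id[unfolded id_def])
next
  case (Cons i xs)
  have "pr (i # xs) = Jn i \<circ> pr xs" by auto
  thus ?case using linear_compose[OF Cons Jn_lin[of i]] by (simp add: comp_def)
qed

lemma pr_add: "pr xs (a + b) = pr xs a + pr xs b" using linear_add[OF pr_lin] by simp
lemma pr_scale: "pr xs (c *\<^sub>R a) = c *\<^sub>R pr xs a" using linear_scale[OF pr_lin] by simp
lemma pr_neg: "pr xs (- a) = - pr xs a" using linear_neg[OF pr_lin] by simp
lemma pr_diff: "pr xs (a - b) = pr xs a - pr xs b" using linear_diff[OF pr_lin] by simp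
lemma pr_zero: "pr xs 0 = 0" using linear_0[OF pr_lin] by simp

lemma pr_skew: "(pr xs u) \<bullet> v = (-1) ^ length xs * (u \<bullet> pr (rev xs) v)"
proof (induction xs arbitrary: v)
  case Nil then show ?case by simp
next
  case (Cons i xs)
  have "pr (i # xs) u \<bullet> v = - (pr xs u \<bullet> Jn i v)" by (simp add: Jn_skew)
  also have "\<dots> = - ((-1) ^ length xs * (u \<bullet> pr (rev xs) (Jn i v)))" using Cons by simp
  also have "pr (rev xs) (Jn i v) = pr (rev (i # xs)) v" by (simp add: pr_append)
  finally show ?case by simp
qed

lemma pr_norm: "set xs \<subseteq> {..<m} \<Longrightarrow> pr xs u \<bullet> pr xs v = u \<bullet> v"
  by (induction xs) (auto simp: Jn_norm)

end


context cliff begin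

definition sg :: "nat \<Rightarrow> real" where "sg n = (-1) ^ n"

lemma sg_sq: "sg n * sg n = 1" unfolding sg_def by (simp add: power_mult_distrib[symmetric])
lemma sg_cases: "sg n = 1 \<or> sg n = -1" unfolding sg_def by (cases "even n") auto
lemma sg_add: "sg (a + b) = sg a * sg b" unfolding sg_def by (simp add: power_add)
lemma sg_Suc: "sg (Suc n) = - sg n" unfolding sg_def by simp

lemma Jn_pr_comm:
  assumes "i < m" "set xs \<subseteq> {..<m}"
  shows "Jn i (pr xs v) = sg (length xs - count_list xs i) *\<^sub>R pr xs (Jn i v)"
  using assms(2)
proof (induction xs arbitrary: v)
  case Nil then show ?case by (simp add: sg_def)
next
  case (Cons j xs)
  have j: "j < m" and xs: "set xs \<subseteq> {..<m}" using Cons.prems by auto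
  have cle: "count_list xs i \<le> length xs" by (induction xs) auto
  show ?case
  proof (cases "i = j")
    case True
    have "Jn i (pr (j # xs) v) = Jn j (Jn i (pr xs v))" using True by simp
    also have "\<dots> = Jn j (sg (length xs - count_list xs i) *\<^sub>R pr xs (Jn i v))" using Cons.IH[OF xs] by simp
    also have "\<dots> = sg (length (j#xs) - count_list (j#xs) i) *\<^sub>R pr (j#xs) (Jn i v)"
      using True cle by (simp add: Jn_scale)
    finally show ?thesis .
  next
    case False
    have "Jn i (pr (j # xs) v) = - Jn j (Jn i (pr xs v))" using Jn_anti[OF assms(1) j False] by simp
    also have "\<dots> = - Jn j (sg (length xs - count_list xs i) *\<^sub>R pr xs (Jn i v))" using Cons.IH[OF xs] by simp
    also have "\<dots> = sg (length (j#xs) - count_list (j#xs) i) *\<^sub>R pr (j#xs) (Jn i v)"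
      using False cle by (simp add: Jn_scale Suc_diff_le sg_Suc)
    finally show ?thesis .
  qed
qed

lemma pr_Jn_comm:
  assumes "i < m" "set xs \<subseteq> {..<m}"
  shows "pr xs (Jn i v) = sg (length xs - count_list xs i) *\<^sub>R Jn i (pr xs v)"
  using Jn_pr_comm[OF assms, of v] sg_sq[of "length xs - count_list xs i"]
  by (simp add: mult.assoc[symmetric])

definition cc :: "nat list \<Rightarrow> nat list \<Rightarrow> nat" where
  "cc xs ys = (\<Sum>y\<leftarrow>ys. length xs - count_list xs y)"

lemma pr_pr_comm:
  assumes "set xs \<subseteq> {..<m}" "set ys \<subseteq> {..<m}"
  shows "pr xs (pr ys v) = sg (cc xs ys) *\<^sub>R pr ys (pr xs v)"
  using assms(2)
proof (induction ys arbitrary: v)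
  case Nil then show ?case by (simp add: cc_def sg_def)
next
  case (Cons y ys)
  have y: "y < m" and ys: "set ys \<subseteq> {..<m}" using Cons.prems by auto
  have "pr xs (pr (y # ys) v) = pr xs (Jn y (pr ys v))" by simp
  also have "\<dots> = sg (length xs - count_list xs y) *\<^sub>R Jn y (pr xs (pr ys v))"
    by (rule pr_Jn_comm[OF y assms(1)])
  also have "\<dots> = sg (length xs - count_list xs y) *\<^sub>R Jn y (sg (cc xs ys) *\<^sub>R pr ys (pr xs v))"
    using Cons.IH[OF ys] by simp
  also have "\<dots> = sg (cc xs (y # ys)) *\<^sub>R pr (y # ys) (pr xs v)"
    by (simp add: Jn_scale cc_def sg_add mult.commute)
  finally show ?case .
qed

definition oddset :: "nat list \<Rightarrow> nat set" where "oddset xs = {i. odd (count_list xs i)}"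

lemma oddset_Cons: "oddset (a # xs) = (oddset xs - {a}) \<union> ({a} - oddset xs)"
  unfolding oddset_def by auto

lemma ins_lemma:
  assumes "sorted_wrt (<) L" "set L \<subseteq> {..<m}" "a < m"
  shows "\<exists>L' \<sigma>. sorted_wrt (<) L' \<and> set L' = (set L - {a}) \<union> ({a} - set L) \<and> (\<sigma> = 1 \<or> \<sigma> = -1)
              \<and> (\<forall>v. Jn a (pr L v) = \<sigma> *\<^sub>R pr L' v)"
  using assms(1,2)
proof (induction L)
  case Nil
  show ?case by (rule exI[of _ "[a]"], rule exI[of _ 1]) auto
next
  case (Cons b L)
  have b: "b < m" and L: "set L \<subseteq> {..<m}" and sL: "sorted_wrt (<) L" and bl: "\<forall>x\<in>set L. b < x"
    using Cons.prems by auto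
  show ?case
  proof (cases "a < b")
    case True
    show ?thesis
      apply (rule exI[of _ "a # b # L"], rule exI[of _ 1])
      using True Cons.prems bl by auto
  next
    case False
    show ?thesis
    proof (cases "a = b")
      case True
      show ?thesis
        apply (rule exI[of _ L], rule exI[of _ "-1"])
        using True Cons.prems bl Jn_sq[OF b] by auto
    next
      case False2: False
      hence ab: "b < a" using False by auto
      obtain L' \<sigma> where L': "sorted_wrt (<) L'" "set L' = (set L - {a}) \<union> ({a} - set L)" "\<sigma> = 1 \<or> \<sigma> = -1"
        "\<forall>v. Jn a (pr L v) = \<sigma> *\<^sub>R pr L' v" using Cons.IH[OF sL L] by blast
      show ?thesis
      proof (rule exI[of _ "b # L'"], rule exI[of _ "-\<sigma>"], intro conjI allI)
        show "sorted_wrt (<) (b # L')" using L'(1,2) bl ab by auto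
        show "set (b # L') = (set (b # L) - {a}) \<union> ({a} - set (b # L))" using L'(2) ab by auto
        show "- \<sigma> = 1 \<or> - \<sigma> = -1" using L'(3) by auto
        fix v
        have "Jn a (pr (b # L) v) = - Jn b (Jn a (pr L v))" using Jn_anti[OF assms(3) b False2] by simp
        also have "\<dots> = - \<sigma> *\<^sub>R pr (b # L') v" using L'(4) by (simp add: Jn_scale)
        finally show "Jn a (pr (b # L) v) = - \<sigma> *\<^sub>R pr (b # L') v" .
      qed
    qed
  qed
qed

lemma canon:
  assumes "set xs \<subseteq> {..<m}"
  shows "\<exists>L \<sigma>. sorted_wrt (<) L \<and> set L = oddset xs \<and> (\<sigma> = 1 \<or> \<sigma> = -1) \<and> (\<forall>v. pr xs v = \<sigma> *\<^sub>R pr L v)"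
  using assms
proof (induction xs)
  case Nil
  show ?case by (rule exI[of _ "[]"], rule exI[of _ 1]) (auto simp: oddset_def)
next
  case (Cons a xs)
  have a: "a < m" and xs: "set xs \<subseteq> {..<m}" using Cons.prems by auto
  obtain L \<sigma> where L: "sorted_wrt (<) L" "set L = oddset xs" "\<sigma> = 1 \<or> \<sigma> = -1" "\<forall>v. pr xs v = \<sigma> *\<^sub>R pr L v"
    using Cons.IH[OF xs] by blast
  have Lm: "set L \<subseteq> {..<m}" using L(2) xs unfolding oddset_def
    by auto (metis count_notin even_zero lessThan_iff subsetD)
  obtain L' \<tau> where L': "sorted_wrt (<) L'" "set L' = (set L - {a}) \<union> ({a} - set L)" "\<tau> = 1 \<or> \<tau> = -1"
        "\<forall>v. Jn a (pr L v) = \<tau> *\<^sub>R pr L' v" using ins_lemma[OF L(1) Lm a] by blast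
  show ?case
  proof (rule exI[of _ L'], rule exI[of _ "\<sigma> * \<tau>"], intro conjI allI)
    show "sorted_wrt (<) L'" by fact
    show "set L' = oddset (a # xs)" using L'(2) L(2) by (simp add: oddset_Cons)
    show "\<sigma> * \<tau> = 1 \<or> \<sigma> * \<tau> = -1" using L(3) L'(3) by auto
    fix v
    show "pr (a # xs) v = (\<sigma> * \<tau>) *\<^sub>R pr L' v" using L(4) L'(4) by (simp add: Jn_scale)
  qed
qed

lemma same_oddset:
  assumes "set xs \<subseteq> {..<m}" "set ys \<subseteq> {..<m}" "oddset xs = oddset ys"
  shows "\<exists>\<sigma>. (\<sigma> = 1 \<or> \<sigma> = -1) \<and> (\<forall>v. pr xs v = \<sigma> *\<^sub>R pr ys v)"
proof -
  obtain L \<sigma> where L: "sorted_wrt (<) L" "set L = oddset xs" "\<sigma> = 1 \<or> \<sigma> = -1" "\<forall>v. pr xs v = \<sigma> *\<^sub>R pr L v"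
    using canon[OF assms(1)] by blast
  obtain L' \<tau> where L': "sorted_wrt (<) L'" "set L' = oddset ys" "\<tau> = 1 \<or> \<tau> = -1" "\<forall>v. pr ys v = \<tau> *\<^sub>R pr L' v"
    using canon[OF assms(2)] by blast
  have "L = L'" using strict_sorted_equal[OF L(1) L'(1)] L(2) L'(2) assms(3) by simp
  show ?thesis
  proof (rule exI[of _ "\<sigma> * \<tau>"], intro conjI allI)
    show "\<sigma> * \<tau> = 1 \<or> \<sigma> * \<tau> = -1" using L(3) L'(3) by auto
    fix v
    have "pr ys v = \<tau> *\<^sub>R pr L v" using L'(4) \<open>L = L'\<close> by simp
    hence "pr L v = \<tau> *\<^sub>R pr ys v" using L'(3) by auto
    thus "pr xs v = (\<sigma> * \<tau>) *\<^sub>R pr ys v" using L(4) by simp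
  qed
qed

end


locale cliff8 = cliff J e m for J :: "'z::euclidean_space \<Rightarrow> 'v::euclidean_space \<Rightarrow> 'v" and e m +
  fixes k :: nat
  assumes mk: "m = 8 * k"
begin

abbreviation gs where "gs \<equiv> gens k"

definition E :: "'v set" where "E = {v. \<forall>g\<in>set gs. pr g v = v}"

lemma g_props: assumes "g \<in> set gs"
  shows "set g \<subseteq> {..<m}" "distinct g" "length g = 4 \<or> length g = 8"
  using C2[OF assms] mk by auto

lemma sg_cc_par:
  assumes "even (length g)"
  shows "sg (cc g ys) = sg (par g ys)"
proof (induction ys)
  case Nil then show ?case by (simp add: cc_def par_def)
next
  case (Cons y ys)
  have cle: "count_list g y \<le> length g" by (induction g) auto
  have "sg (length g - count_list g y) = sg (count_list g y)"
  proof -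
    have "sg (length g - count_list g y) * sg (count_list g y) = sg (length g)"
      using cle by (simp add: sg_add[symmetric])
    also have "\<dots> = 1" using assms by (simp add: sg_def)
    finally show ?thesis using sg_cases[of "count_list g y"] by auto
  qed
  moreover have "cc g (y # ys) = (length g - count_list g y) + cc g ys" by (simp add: cc_def)
  moreover have "par g (y # ys) = count_list g y + par g ys" by (simp add: par_def)
  ultimately show ?case using Cons by (simp add: sg_add)
qed

lemma pr_g_comm:
  assumes "g \<in> set gs" "set ys \<subseteq> {..<m}"
  shows "pr g (pr ys v) = sg (par g ys) *\<^sub>R pr ys (pr g v)"
proof -
  have "even (length g)" using g_props(3)[OF assms(1)] by auto
  thus ?thesis using pr_pr_comm[OF g_props(1)[OF assms(1)] assms(2)] sg_cc_par by simp
qed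

fun tri :: "nat \<Rightarrow> nat" where "tri 0 = 0" | "tri (Suc n) = tri n + n"

lemma pr_rev:
  assumes "distinct xs" "set xs \<subseteq> {..<m}"
  shows "pr (rev xs) v = sg (tri (length xs)) *\<^sub>R pr xs v"
  using assms
proof (induction xs arbitrary: v)
  case Nil then show ?case by (simp add: sg_def)
next
  case (Cons a xs)
  have a: "a < m" "a \<notin> set xs" and xs: "distinct xs" "set xs \<subseteq> {..<m}" using Cons.prems by auto
  have "pr (rev (a # xs)) v = pr (rev xs) (Jn a v)" by (simp add: pr_append)
  also have "\<dots> = sg (length (rev xs) - count_list (rev xs) a) *\<^sub>R Jn a (pr (rev xs) v)"
    by (rule pr_Jn_comm) (use a xs in auto)
  also have "count_list (rev xs) a = 0" using a by simp
  also have "pr (rev xs) v = sg (tri (length xs)) *\<^sub>R pr xs v" using Cons.IH[OF xs] .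
  finally show ?case by (simp add: Jn_scale sg_add[symmetric] add.commute)
qed

lemma g_sym: assumes "g \<in> set gs" shows "pr g u \<bullet> v = u \<bullet> pr g v"
proof -
  have l: "length g = 4 \<or> length g = 8" using g_props(3)[OF assms] .
  have t: "sg (tri (length g)) = 1" using l by (auto simp: sg_def numeral_eq_Suc)
  have "pr g u \<bullet> v = (-1) ^ length g * (u \<bullet> pr (rev g) v)" by (rule pr_skew)
  also have "pr (rev g) v = pr g v" using pr_rev[OF g_props(2,1)[OF assms]] t by simp
  finally show ?thesis using l by auto
qed

lemma inner_all_eq: "(\<And>w. a \<bullet> w = b \<bullet> w) \<Longrightarrow> a = (b::'v)"
  by (metis inner_diff_left inner_eq_zero_iff right_minus_eq)

lemma g_inv: assumes "g \<in> set gs" shows "pr g (pr g v) = v"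
proof (rule inner_all_eq)
  fix w
  show "pr g (pr g v) \<bullet> w = v \<bullet> w"
    using g_sym[OF assms, of "pr g v" "pr g w"] pr_norm[OF g_props(1)[OF assms]] g_sym[OF assms]
    by (metis)
qed

lemma g_comm: assumes "g \<in> set gs" "h \<in> set gs" shows "pr g (pr h v) = pr h (pr g v)"
proof -
  have "even (par g h)" using C1 assms by blast
  hence "sg (par g h) = 1" by (simp add: sg_def)
  thus ?thesis using pr_g_comm[OF assms(1) g_props(1)[OF assms(2)]] by simp
qed

lemma subspace_E: "subspace E"
  unfolding subspace_def E_def by (auto simp: pr_add pr_scale pr_zero)

lemma pr_concat_E: "set gl \<subseteq> set gs \<Longrightarrow> x \<in> E \<Longrightarrow> pr (concat gl) x = x"
  by (induction gl) (auto simp: pr_append E_def)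

lemma K1a:
  assumes "set xs \<subseteq> {..<m}" "\<forall>g\<in>set gs. even (par g xs)"
  shows "\<exists>\<sigma>. (\<sigma> = 1 \<or> \<sigma> = -1) \<and> (\<forall>x\<in>E. pr xs x = \<sigma> *\<^sub>R x)"
proof -
  obtain gl where gl: "set gl \<subseteq> set gs" "\<forall>y. odd (count_list xs y) \<longleftrightarrow> odd (count_list (concat gl) y)"
    using C4[of xs k] assms mk by auto
  have cgl: "set (concat gl) \<subseteq> {..<m}" using gl(1) g_props(1) by auto
  have "oddset xs = oddset (concat gl)" using gl(2) unfolding oddset_def by auto
  then obtain \<sigma> where s: "\<sigma> = 1 \<or> \<sigma> = -1" "\<forall>v. pr xs v = \<sigma> *\<^sub>R pr (concat gl) v"
    using same_oddset[OF assms(1) cgl] by blast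
  show ?thesis using s pr_concat_E[OF gl(1)] by auto
qed

lemma K1b:
  assumes "set xs \<subseteq> {..<m}" "g \<in> set gs" "odd (par g xs)" "x \<in> E" "y \<in> E"
  shows "pr xs x \<bullet> y = 0"
proof -
  have "sg (par g xs) = -1" using assms(3) by (simp add: sg_def)
  hence "pr g (pr xs x) = - pr xs x" using pr_g_comm[OF assms(2,1), of x] assms(4,2)
    by (simp add: E_def)
  moreover have "pr xs x \<bullet> y = pr xs x \<bullet> pr g y" using assms(5,2) by (simp add: E_def)
  ultimately have "pr xs x \<bullet> y = - (pr xs x \<bullet> y)" using g_sym[OF assms(2)] by (metis inner_minus_left)
  thus ?thesis by simp
qed

lemma K1_odd:
  assumes "set xs \<subseteq> {..<m}" "odd (length xs)" "x \<in> E" "y \<in> E"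
  shows "pr xs x \<bullet> y = 0"
proof -
  obtain g where "g \<in> set gs" "odd (par g xs)" using C5[of xs k] assms mk by auto
  thus ?thesis using K1b assms by blast
qed

lemma K1:
  assumes "set xs \<subseteq> {..<m}"
  shows "\<exists>\<kappa>. \<forall>x\<in>E. \<forall>y\<in>E. pr xs x \<bullet> y = \<kappa> * (x \<bullet> y)"
proof (cases "\<forall>g\<in>set gs. even (par g xs)")
  case True
  then obtain \<sigma> where "\<forall>x\<in>E. pr xs x = \<sigma> *\<^sub>R x" using K1a[OF assms] by blast
  thus ?thesis by auto
next
  case False
  then obtain g where "g \<in> set gs" "odd (par g xs)" by auto
  thus ?thesis using K1b[OF assms] by (intro exI[of _ 0]) auto
qed

lemma Gram:
  assumes "set xs \<subseteq> {..<m}" "set ys \<subseteq> {..<m}"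
  shows "\<exists>\<kappa>. \<forall>x\<in>E. \<forall>y\<in>E. pr xs x \<bullet> pr ys y = \<kappa> * (x \<bullet> y)"
proof -
  have "set (rev ys @ xs) \<subseteq> {..<m}" using assms by auto
  then obtain \<kappa> where k: "\<forall>x\<in>E. \<forall>y\<in>E. pr (rev ys @ xs) x \<bullet> y = \<kappa> * (x \<bullet> y)" using K1 by blast
  have "pr xs x \<bullet> pr ys y = ((-1) ^ length ys * \<kappa>) * (x \<bullet> y)" if "x \<in> E" "y \<in> E" for x y
  proof -
    have "pr xs x \<bullet> pr ys y = pr ys y \<bullet> pr xs x" by (simp add: inner_commute)
    also have "\<dots> = (-1) ^ length ys * (y \<bullet> pr (rev ys) (pr xs x))" by (rule pr_skew)
    also have "y \<bullet> pr (rev ys) (pr xs x) = pr (rev ys @ xs) x \<bullet> y" by (simp add: pr_append inner_commute)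
    finally show ?thesis using k that by simp
  qed
  thus ?thesis by blast
qed

end


context cliff8 begin

primrec Pl :: "nat list list \<Rightarrow> 'v \<Rightarrow> 'v" where
  "Pl [] v = v"
| "Pl (g # gl) v = (1/2) *\<^sub>R (Pl gl v + pr g (Pl gl v))"

definition P where "P = Pl gs"

lemma Pl_lin: "linear (Pl gl)"
proof (induction gl)
  case Nil then show ?case by (simp add: linear_id[unfolded id_def])
next
  case (Cons g gl)
  have "linear (\<lambda>v. Pl gl v + pr g (Pl gl v))"
    using linear_compose[OF Cons pr_lin[of g]] Cons by (intro linear_compose_add) (auto simp: comp_def)
  hence "linear (\<lambda>v. (1/2) *\<^sub>R (Pl gl v + pr g (Pl gl v)))" by (intro linear_compose_scale_right)
  thus ?case by simp
qed

lemma Pl_comm: "set gl \<subseteq> set gs \<Longrightarrow> h \<in> set gs \<Longrightarrow> pr h (Pl gl v) = Pl gl (pr h v)"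
  by (induction gl) (auto simp: pr_add pr_scale g_comm)

lemma Pl_fix: "set gl \<subseteq> set gs \<Longrightarrow> g \<in> set gl \<Longrightarrow> pr g (Pl gl v) = Pl gl v"
proof (induction gl)
  case Nil then show ?case by simp
next
  case (Cons g' gl)
  show ?case
  proof (cases "g = g'")
    case True
    thus ?thesis using Cons.prems by (auto simp: pr_add pr_scale g_inv)
  next
    case False
    hence ggl: "g \<in> set gl" using Cons.prems by auto
    have g: "g \<in> set gs" "g' \<in> set gs" using Cons.prems by auto
    have "pr g (pr g' (Pl gl v)) = pr g' (Pl gl v)"
      using g_comm[OF g, of "Pl gl v"] Cons ggl by auto
    thus ?thesis using Cons ggl by (auto simp: pr_add pr_scale)
  qed
qed

lemma Pl_E: "set gl \<subseteq> set gs \<Longrightarrow> x \<in> E \<Longrightarrow> Pl gl x = x"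
  by (induction gl) (auto simp: E_def)

lemma Pl_sym: "set gl \<subseteq> set gs \<Longrightarrow> Pl gl u \<bullet> v = u \<bullet> Pl gl v"
proof (induction gl arbitrary: u v)
  case Nil then show ?case by simp
next
  case (Cons g gl)
  have g: "g \<in> set gs" and gl: "set gl \<subseteq> set gs" using Cons.prems by auto
  have "Pl (g # gl) u \<bullet> v = (1/2) * (Pl gl u \<bullet> v + pr g (Pl gl u) \<bullet> v)"
    by (simp add: inner_add_left)
  also have "pr g (Pl gl u) \<bullet> v = Pl gl u \<bullet> pr g v" by (rule g_sym[OF g])
  also have "Pl gl u \<bullet> pr g v = u \<bullet> Pl gl (pr g v)" using Cons.IH[OF gl] .
  also have "Pl gl u \<bullet> v = u \<bullet> Pl gl v" using Cons.IH[OF gl] .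
  also have "Pl gl (pr g v) = pr g (Pl gl v)" using Pl_comm[OF gl g] by simp
  finally show ?case by (simp add: inner_add_right)
qed

lemma P_lin: "linear P" unfolding P_def by (rule Pl_lin)
lemma P_in_E: "P v \<in> E" unfolding P_def E_def using Pl_fix[of gs] by auto
lemma P_E: "x \<in> E \<Longrightarrow> P x = x" unfolding P_def by (rule Pl_E) auto
lemma P_sym: "P u \<bullet> v = u \<bullet> P v" unfolding P_def by (rule Pl_sym) auto

lemma Pl_closed:
  assumes "subspace M" "\<And>g x. g \<in> set gs \<Longrightarrow> x \<in> M \<Longrightarrow> pr g x \<in> M" "set gl \<subseteq> set gs" "x \<in> M"
  shows "Pl gl x \<in> M"
  using assms(3,4)
proof (induction gl)
  case Nil then show ?case by simp
next
  case (Cons g gl)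
  hence "Pl gl x \<in> M" "pr g (Pl gl x) \<in> M" using assms(2) by auto
  thus ?case using assms(1) by (simp add: subspace_add subspace_scale)
qed

lemma P_closed:
  assumes "subspace M" "\<And>g x. g \<in> set gs \<Longrightarrow> x \<in> M \<Longrightarrow> pr g x \<in> M" "x \<in> M"
  shows "P x \<in> M"
  unfolding P_def using Pl_closed[OF assms(1,2) _ assms(3)] by auto

lemma PK:
  assumes "set xs \<subseteq> {..<m}"
  shows "\<exists>\<kappa>. \<forall>x\<in>E. P (pr xs x) = \<kappa> *\<^sub>R x"
proof -
  obtain \<kappa> where k: "\<forall>x\<in>E. \<forall>y\<in>E. pr xs x \<bullet> y = \<kappa> * (x \<bullet> y)" using K1[OF assms] by blast
  have "P (pr xs x) = \<kappa> *\<^sub>R x" if x: "x \<in> E" for x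
  proof -
    have in_E: "P (pr xs x) - \<kappa> *\<^sub>R x \<in> E" using subspace_E P_in_E x
      by (simp add: subspace_diff subspace_scale)
    have "(P (pr xs x) - \<kappa> *\<^sub>R x) \<bullet> y = 0" if y: "y \<in> E" for y
    proof -
      have "P (pr xs x) \<bullet> y = pr xs x \<bullet> P y" by (rule P_sym)
      also have "\<dots> = \<kappa> * (x \<bullet> y)" using P_E[OF y] k x y by simp
      finally show ?thesis by (simp add: inner_diff_left)
    qed
    from this[OF in_E] show ?thesis by simp
  qed
  thus ?thesis by blast
qed

lemma P_odd:
  assumes "set xs \<subseteq> {..<m}" "odd (length xs)" "x \<in> E"
  shows "P (pr xs x) = 0"
proof -
  have "P (pr xs x) \<bullet> y = 0" if "y \<in> E" for y
    using P_sym[of "pr xs x" y] P_E[OF that] K1_odd[OF assms(1,2,3) that] by simp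
  from this[OF P_in_E[of "pr xs x"]] show ?thesis by simp
qed

definition invsub :: "'v set \<Rightarrow> bool" where
  "invsub M \<longleftrightarrow> subspace M \<and> (\<forall>i<m. \<forall>x\<in>M. Jn i x \<in> M)"

lemma invsub_pr: "invsub M \<Longrightarrow> set xs \<subseteq> {..<m} \<Longrightarrow> x \<in> M \<Longrightarrow> pr xs x \<in> M"
  by (induction xs) (auto simp: invsub_def)

lemma meet_aux:
  assumes M: "invsub M" and x: "x \<in> M" "x \<noteq> 0" and gl: "set gl \<subseteq> set gs"
  shows "\<exists>y\<in>M. y \<noteq> 0 \<and> (\<forall>g\<in>set gl. pr g y = y)"
  using gl
proof (induction gl)
  case Nil then show ?case using x by auto
next
  case (Cons g gl)
  have g: "g \<in> set gs" and glg: "set gl \<subseteq> set gs" using Cons.prems by auto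
  obtain y where y: "y \<in> M" "y \<noteq> 0" "\<forall>g\<in>set gl. pr g y = y" using Cons.IH[OF glg] by blast
  have sM: "subspace M" using M by (simp add: invsub_def)
  have gM: "pr g y \<in> M" using invsub_pr[OF M g_props(1)[OF g] y(1)] .
  define y1 where "y1 = (1/2) *\<^sub>R (y + pr g y)"
  define y2 where "y2 = (1/2) *\<^sub>R (y - pr g y)"
  have y12: "y = y1 + y2" unfolding y1_def y2_def by (simp add: algebra_simps scaleR_2[symmetric])
  have y1M: "y1 \<in> M" and y2M: "y2 \<in> M" unfolding y1_def y2_def using sM y(1) gM
    by (auto simp: subspace_add subspace_diff subspace_scale)
  have cm: "pr g' (pr g y) = pr g y" if "g' \<in> set gl" for g'
    using g_comm[of g' g y] that glg g y(3) by auto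
  have fix1: "pr g' y1 = y1" if "g' \<in> set gl" for g'
    using y(3) that cm[OF that] unfolding y1_def by (auto simp: pr_add pr_scale)
  have fix2: "pr g' y2 = y2" if "g' \<in> set gl" for g'
    using y(3) that cm[OF that] unfolding y2_def by (auto simp: pr_diff pr_scale)
  show ?case
  proof (cases "y1 = 0")
    case False
    have "pr g y1 = y1" unfolding y1_def using g by (simp add: pr_add pr_scale g_inv add.commute)
    thus ?thesis using False y1M fix1 by (intro bexI[of _ y1]) auto
  next
    case True
    hence y2nz: "y2 \<noteq> 0" using y12 y(2) by simp
    have gy2: "pr g y2 = - y2" unfolding y2_def using g by (simp add: pr_diff pr_scale g_inv algebra_simps)
    obtain fl where fl: "set fl \<subseteq> {..<m}" "\<forall>h\<in>set gs. odd (par h fl) \<longleftrightarrow> h = g"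
      using C3[OF g] mk by auto
    define z where "z = pr fl y2"
    have zM: "z \<in> M" unfolding z_def using invsub_pr[OF M fl(1) y2M] .
    have "z \<bullet> z = y2 \<bullet> y2" unfolding z_def using pr_norm[OF fl(1)] by simp
    hence znz: "z \<noteq> 0" using y2nz by auto
    have "pr g z = z"
    proof -
      have "sg (par g fl) = -1" using fl(2) g by (simp add: sg_def)
      thus ?thesis unfolding z_def using pr_g_comm[OF g fl(1), of y2] gy2 by (simp add: pr_neg)
    qed
    moreover have "pr g' z = z" if g': "g' \<in> set gl" for g'
    proof (cases "g' = g")
      case True
      have "y2 = - y2" using fix2[OF g'] gy2 True by simp
      hence "2 *\<^sub>R y2 = 0" by (simp add: scaleR_2 eq_neg_iff_add_eq_0)
      hence "y2 = 0" by simp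
      thus ?thesis using y2nz by simp
    next
      case False
      have g's: "g' \<in> set gs" using g' glg by auto
      have "even (par g' fl)" using fl(2) g's False by blast
      hence "sg (par g' fl) = 1" by (simp add: sg_def)
      thus ?thesis unfolding z_def using pr_g_comm[OF g's fl(1), of y2] fix2[OF g'] by simp
    qed
    ultimately show ?thesis using zM znz by (intro bexI[of _ z]) auto
  qed
qed

lemma meet:
  assumes "invsub M" "x \<in> M" "x \<noteq> 0"
  shows "\<exists>y\<in>M. y \<noteq> 0 \<and> y \<in> E"
  using meet_aux[OF assms, of gs] unfolding E_def by auto

definition GEN :: "'v set" where "GEN = {pr xs x | xs x. set xs \<subseteq> {..<m} \<and> x \<in> E}"

lemma E_sub_GEN: "E \<subseteq> GEN" unfolding GEN_def by (auto intro: exI[of _ "[]"])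

lemma Jn_span_closed:
  assumes "i < m" "\<And>x. x \<in> S \<Longrightarrow> Jn i x \<in> span S" "y \<in> span S"
  shows "Jn i y \<in> span S"
proof -
  have "Jn i ` span S = span (Jn i ` S)" using linear_span_image[OF Jn_lin[of i]] by simp
  moreover have "span (Jn i ` S) \<subseteq> span S" using assms(2) by (simp add: image_subset_iff span_subspace_induct span_minimal)
  ultimately show ?thesis using assms(3) by blast
qed

lemma span_GEN: "span GEN = UNIV"
proof -
  have inv: "invsub {z. \<forall>w\<in>span GEN. z \<bullet> w = 0}" (is "invsub ?Mp")
  proof -
    have "subspace ?Mp" unfolding subspace_def by (auto simp: inner_add_left)
    moreover have "Jn i z \<in> ?Mp" if "i < m" "z \<in> ?Mp" for i z
    proof -
      have "Jn i w \<in> span GEN" if "w \<in> span GEN" for w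
      proof (rule Jn_span_closed[OF \<open>i < m\<close> _ that])
        fix x assume "x \<in> GEN"
        then obtain xs y where "x = pr xs y" "set xs \<subseteq> {..<m}" "y \<in> E" unfolding GEN_def by blast
        hence "Jn i x \<in> GEN" unfolding GEN_def using \<open>i < m\<close> by (auto intro!: exI[of _ "i # xs"])
        thus "Jn i x \<in> span GEN" by (rule span_base)
      qed
      thus ?thesis using that by (auto simp: Jn_skew)
    qed
    ultimately show ?thesis unfolding invsub_def by blast
  qed
  have "v \<in> span GEN" for v
  proof -
    obtain y z where yz: "y \<in> span GEN" "\<And>w. w \<in> span GEN \<Longrightarrow> orthogonal z w" "v = y + z"
      using orthogonal_subspace_decomp_exists by blast
    have zM: "z \<in> ?Mp" using yz(2) by (simp add: orthogonal_def)
    have "z = 0"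
    proof (rule ccontr)
      assume "z \<noteq> 0"
      then obtain u where u: "u \<in> ?Mp" "u \<noteq> 0" "u \<in> E" using meet[OF inv zM] by blast
      have "u \<in> span GEN" using u(3) E_sub_GEN span_base by blast
      hence "u \<bullet> u = 0" using u(1) by blast
      thus False using u(2) by simp
    qed
    thus ?thesis using yz by simp
  qed
  thus ?thesis by auto
qed

end


context cliff8 begin

definition valid :: "(nat list \<times> 'v) list \<Rightarrow> bool" where
  "valid R \<longleftrightarrow> (\<forall>(xs, x)\<in>set R. set xs \<subseteq> {..<m} \<and> x \<in> E)"

definition sumF :: "('v \<Rightarrow> 'v) \<Rightarrow> (nat list \<times> 'v) list \<Rightarrow> 'v" where
  "sumF T R = sum_list (map (\<lambda>(xs, x). pr xs (T x)) R)"

lemma sumF_append: "sumF T (R @ R') = sumF T R + sumF T R'" by (simp add: sumF_def)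

lemma valid_append: "valid (R @ R') \<longleftrightarrow> valid R \<and> valid R'" by (auto simp: valid_def)

lemma rep_exists: "\<exists>R. valid R \<and> v = sumF id R"
proof -
  have "v \<in> span GEN" using span_GEN by simp
  thus ?thesis
  proof (induction rule: span_induct_alt)
    case base
    show ?case by (rule exI[of _ "[]"]) (simp add: valid_def sumF_def)
  next
    case (step c x y)
    obtain xs z where x: "x = pr xs z" "set xs \<subseteq> {..<m}" "z \<in> E" using step(1) unfolding GEN_def by blast
    obtain R where R: "valid R" "y = sumF id R" using step(2) by blast
    have "c *\<^sub>R z \<in> E" using subspace_E x(3) by (simp add: subspace_scale)
    thus ?case using R x
      by (intro exI[of _ "(xs, c *\<^sub>R z) # R"]) (auto simp: valid_def sumF_def pr_scale)
  qed
qed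

lemma sumF_inner_left: "sumF T R \<bullet> w = sum_list (map (\<lambda>(xs, x). pr xs (T x) \<bullet> w) R)"
  by (induction R) (auto simp: sumF_def inner_add_left)

lemma sumF_gram:
  assumes T: "\<forall>x\<in>E. T x \<in> E" "\<forall>x\<in>E. \<forall>y\<in>E. T x \<bullet> T y = x \<bullet> y"
    and R: "valid R" "valid R'"
  shows "sumF T R \<bullet> sumF T R' = sumF id R \<bullet> sumF id R'"
proof -
  have trm: "pr xs (T x) \<bullet> pr ys (T y) = pr xs x \<bullet> pr ys y"
    if A: "set xs \<subseteq> {..<m}" "x \<in> E" "set ys \<subseteq> {..<m}" "y \<in> E" for xs x ys y
  proof -
    obtain \<kappa> where k: "\<forall>x\<in>E. \<forall>y\<in>E. pr xs x \<bullet> pr ys y = \<kappa> * (x \<bullet> y)" using Gram[OF A(1,3)] by blast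
    show ?thesis using k T A by simp
  qed
  have inner2: "\<forall>(ys, y)\<in>set R'. set ys \<subseteq> {..<m} \<and> y \<in> E \<Longrightarrow>
      pr xs (T x) \<bullet> sumF T R' = pr xs x \<bullet> sumF id R'"
    if "set xs \<subseteq> {..<m}" "x \<in> E" for xs x
    using that
  proof (induction R')
    case Nil then show ?case by (simp add: sumF_def)
  next
    case (Cons a R')
    obtain ys y where a: "a = (ys, y)" by (cases a)
    show ?case using Cons trm[of xs x ys y] by (auto simp: a sumF_def inner_add_right)
  qed
  show ?thesis using R(1)
  proof (induction R)
    case Nil then show ?case by (simp add: sumF_def)
  next
    case (Cons a R)
    obtain xs x where a: "a = (xs, x)" by (cases a)
    have v: "valid R" "set xs \<subseteq> {..<m}" "x \<in> E" using Cons.prems by (auto simp: valid_def a)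
    have "sumF T (a # R) = pr xs (T x) + sumF T R" "sumF id (a # R) = pr xs x + sumF id R"
      by (auto simp: sumF_def a)
    thus ?case using Cons.IH[OF v(1)] inner2[OF v(2,3)] R(2) unfolding valid_def
      by (simp add: inner_add_left id_def)
  qed
qed

lemma sumF_welldef:
  assumes T: "\<forall>x\<in>E. T x \<in> E" "\<forall>x\<in>E. \<forall>y\<in>E. T x \<bullet> T y = x \<bullet> y"
    and R: "valid R" "valid R'" "sumF id R = sumF id R'"
  shows "sumF T R = sumF T R'"
proof -
  let ?a = "sumF T R" and ?b = "sumF T R'"
  have "(?a - ?b) \<bullet> (?a - ?b) = ?a \<bullet> ?a - 2 * (?a \<bullet> ?b) + ?b \<bullet> ?b"
    by (simp add: inner_diff_left inner_diff_right inner_commute)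
  also have "\<dots> = sumF id R \<bullet> sumF id R - 2 * (sumF id R \<bullet> sumF id R') + sumF id R' \<bullet> sumF id R'"
    using sumF_gram[OF T] R by simp
  also have "\<dots> = 0" using R(3) by simp
  finally show ?thesis by simp
qed

definition ext :: "('v \<Rightarrow> 'v) \<Rightarrow> 'v \<Rightarrow> 'v" where
  "ext T v = sumF T (SOME R. valid R \<and> v = sumF id R)"

lemma ext_eq:
  assumes T: "\<forall>x\<in>E. T x \<in> E" "\<forall>x\<in>E. \<forall>y\<in>E. T x \<bullet> T y = x \<bullet> y" and R: "valid R"
  shows "ext T (sumF id R) = sumF T R"
proof -
  define R0 where "R0 = (SOME R0. valid R0 \<and> sumF id R = sumF id R0)"
  have "valid R0 \<and> sumF id R = sumF id R0" unfolding R0_def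
    by (rule someI_ex) (use R in blast)
  thus ?thesis unfolding ext_def R0_def[symmetric] using sumF_welldef[OF T R] by auto
qed

lemma sumF_Jn: "Jn i (sumF T R) = sumF T (map (\<lambda>(xs, x). (i # xs, x)) R)"
  by (induction R) (auto simp: sumF_def Jn_add Jn_zero)

lemma sumF_scale: "linear T \<Longrightarrow> c *\<^sub>R sumF T R = sumF T (map (\<lambda>(xs, x). (xs, c *\<^sub>R x)) R)"
  by (induction R) (auto simp: sumF_def pr_scale linear_scale scaleR_add_right)

lemma ext_props:
  assumes T: "linear T" "\<forall>x\<in>E. T x \<in> E" "\<forall>x\<in>E. \<forall>y\<in>E. T x \<bullet> T y = x \<bullet> y"
  shows "linear (ext T)" "\<And>u v. ext T u \<bullet> ext T v = u \<bullet> v"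
    "\<And>i v. i < m \<Longrightarrow> ext T (Jn i v) = Jn i (ext T v)" "\<And>x. x \<in> E \<Longrightarrow> ext T x = T x"
proof -
  have rep: "\<exists>R. valid R \<and> v = sumF id R" for v using rep_exists by blast
  have eq: "ext T (sumF id R) = sumF T R" if "valid R" for R using ext_eq[OF T(2,3) that] .
  show "linear (ext T)"
  proof (rule linearI)
    fix u v
    obtain Ru Rv where "valid Ru" "u = sumF id Ru" "valid Rv" "v = sumF id Rv" using rep by metis
    thus "ext T (u + v) = ext T u + ext T v"
      using eq[of "Ru @ Rv"] eq[of Ru] eq[of Rv] by (simp add: sumF_append valid_append)
  next
    fix c :: real and v
    obtain R where R: "valid R" "v = sumF id R" using rep by metis
    have vR: "valid (map (\<lambda>(xs, x). (xs, c *\<^sub>R x)) R)" using R(1) subspace_E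
      by (auto simp: valid_def subspace_scale)
    have "c *\<^sub>R v = sumF id (map (\<lambda>(xs, x). (xs, c *\<^sub>R x)) R)"
      using sumF_scale[of id c R] R(2) by (simp add: linear_id)
    thus "ext T (c *\<^sub>R v) = c *\<^sub>R ext T v" using eq[OF vR] eq[OF R(1)] R(2) sumF_scale[OF T(1)] by simp
  qed
  show "ext T u \<bullet> ext T v = u \<bullet> v" for u v
  proof -
    obtain Ru Rv where "valid Ru" "u = sumF id Ru" "valid Rv" "v = sumF id Rv" using rep by metis
    thus ?thesis using eq sumF_gram[OF T(2,3)] by simp
  qed
  show "ext T (Jn i v) = Jn i (ext T v)" if "i < m" for i v
  proof -
    obtain R where R: "valid R" "v = sumF id R" using rep by metis
    have vR: "valid (map (\<lambda>(xs, x). (i # xs, x)) R)" using R(1) that unfolding valid_def by fastforce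
    show ?thesis using eq[OF vR] eq[OF R(1)] R(2) sumF_Jn by simp
  qed
  show "ext T x = T x" if "x \<in> E" for x
  proof -
    have "valid [([], x)]" using that by (simp add: valid_def)
    moreover have "sumF id [([], x)] = x" "sumF T [([], x)] = T x" by (simp_all add: sumF_def)
    ultimately show ?thesis using eq by metis
  qed
qed

definition commJ :: "('v \<Rightarrow> 'v) \<Rightarrow> bool" where
  "commJ \<xi> \<longleftrightarrow> (\<forall>i<m. \<forall>v. \<xi> (Jn i v) = Jn i (\<xi> v))"

lemma commJ_pr: "commJ \<xi> \<Longrightarrow> set xs \<subseteq> {..<m} \<Longrightarrow> \<xi> (pr xs v) = pr xs (\<xi> v)"
  by (induction xs) (auto simp: commJ_def)

lemma commJ_E: "commJ \<xi> \<Longrightarrow> x \<in> E \<Longrightarrow> \<xi> x \<in> E"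
  unfolding E_def using commJ_pr g_props(1) by auto

lemma uniq:
  assumes "linear \<xi>1" "linear \<xi>2" "commJ \<xi>1" "commJ \<xi>2" "\<And>x. x \<in> E \<Longrightarrow> \<xi>1 x = \<xi>2 x"
  shows "\<xi>1 = \<xi>2"
proof
  fix v
  obtain R where R: "valid R" "v = sumF id R" using rep_exists by blast
  have "\<xi> (sumF id R) = sumF \<xi> R" if "linear \<xi>" "commJ \<xi>" "valid R" for \<xi> R
    using that(3)
  proof (induction R)
    case Nil then show ?case by (simp add: sumF_def linear_0[OF that(1)])
  next
    case (Cons a R)
    obtain xs x where a: "a = (xs, x)" by (cases a)
    have "valid R" "set xs \<subseteq> {..<m}" using Cons.prems by (auto simp: valid_def a)
    thus ?case using Cons.IH commJ_pr[OF that(2)] linear_add[OF that(1)]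
      by (simp add: sumF_def a)
  qed
  moreover have "sumF \<xi>1 R = sumF \<xi>2 R" using R(1) assms(5)
    by (induction R) (auto simp: sumF_def valid_def)
  ultimately show "\<xi>1 v = \<xi>2 v" using R assms by simp
qed

end


context cliff8 begin

lemma m_pos: "0 < m"
proof -
  have "card {..<m} = card (Basis :: 'z set)" using bij_betw_same_card[OF e_bij] .
  thus ?thesis by simp
qed

lemma Lag_iff: "L \<in> Lag J \<longleftrightarrow> subspace L \<and> (\<forall>u\<in>L. \<forall>v\<in>L. \<forall>i<m. Jn i u \<bullet> v = 0) \<and> 2 * dim L = DIM('v)"
  unfolding Lag_def using hbracket_zero_iff by auto

lemma Jn_inj: "i < m \<Longrightarrow> Jn i x = Jn i y \<Longrightarrow> x = y"
  by (metis Jn_sq neg_equal_iff_equal)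

lemma dim_pair:
  assumes A: "subspace A" and i: "i < m" and iso: "\<forall>x\<in>A. \<forall>y\<in>A. Jn i x \<bullet> y = 0"
  shows "dim {x + y | x y. x \<in> A \<and> y \<in> Jn i ` A} = 2 * dim A"
proof -
  have sB: "subspace (Jn i ` A)" using linear_subspace_image[OF Jn_lin A] .
  have "A \<inter> Jn i ` A \<subseteq> {0}"
  proof
    fix x assume "x \<in> A \<inter> Jn i ` A"
    then obtain y where "x \<in> A" "y \<in> A" "x = Jn i y" by auto
    hence "x \<bullet> x = 0" using iso by auto
    thus "x \<in> {0}" by simp
  qed
  hence d0: "dim (A \<inter> Jn i ` A) = 0" by simp
  have "inj_on (Jn i) (span A)" using Jn_inj[OF i] by (auto simp: inj_on_def)
  hence "dim (Jn i ` A) = dim A" using dim_image_eq[OF Jn_lin] by blast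
  thus ?thesis using dim_sums_Int[OF A sB] d0 by simp
qed

lemma iso_span:
  assumes "\<forall>a\<in>S. \<forall>b\<in>S. \<forall>i<m. Jn i a \<bullet> b = 0"
  shows "\<forall>a\<in>span S. \<forall>b\<in>span S. \<forall>i<m. Jn i a \<bullet> b = 0"
proof (intro ballI allI impI)
  fix a b i assume a: "a \<in> span S" and b: "b \<in> span S" and i: "i < m"
  have s1: "span S \<subseteq> {a. \<forall>b\<in>S. Jn i a \<bullet> b = 0}"
    by (rule span_minimal) (use assms i in \<open>auto simp: subspace_def Jn_add Jn_scale Jn_zero inner_add_left\<close>)
  have "span S \<subseteq> {b. Jn i a \<bullet> b = 0}"
    by (rule span_minimal) (use s1 a in \<open>auto simp: subspace_def inner_add_right\<close>)
  thus "Jn i a \<bullet> b = 0" using b by auto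
qed

lemma GO:
  assumes "set a \<subseteq> {..<m}" "set b \<subseteq> {..<m}" "x \<in> E" "y \<in> E" "odd (length a + length b)"
  shows "pr a x \<bullet> pr b y = 0"
proof -
  have "pr a x \<bullet> pr b y = pr b y \<bullet> pr a x" by (simp add: inner_commute)
  also have "\<dots> = (-1) ^ length b * (y \<bullet> pr (rev b) (pr a x))" by (rule pr_skew)
  also have "y \<bullet> pr (rev b) (pr a x) = pr (rev b @ a) x \<bullet> y" by (simp add: pr_append inner_commute)
  also have "\<dots> = 0" by (rule K1_odd) (use assms in auto)
  finally show ?thesis by simp
qed

lemma Gram0:
  assumes "set a \<subseteq> {..<m}" "set b \<subseteq> {..<m}" "x \<in> E" "y \<in> E" "x \<bullet> y = 0"
  shows "pr a x \<bullet> pr b y = 0"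
proof -
  obtain \<kappa> where "\<forall>x\<in>E. \<forall>y\<in>E. pr a x \<bullet> pr b y = \<kappa> * (x \<bullet> y)" using Gram[OF assms(1,2)] by blast
  thus ?thesis using assms by simp
qed

definition LG :: "'v set \<Rightarrow> 'v set" where
  "LG U = {pr xs u | xs u. set xs \<subseteq> {..<m} \<and> even (length xs) \<and> u \<in> U} \<union>
          {pr xs w | xs w. set xs \<subseteq> {..<m} \<and> odd (length xs) \<and> w \<in> E \<and> (\<forall>u\<in>U. w \<bullet> u = 0)}"

definition Lam :: "'v set \<Rightarrow> 'v set" where "Lam U = span (LG U)"

lemma Lam_iso:
  assumes U: "U \<subseteq> E"
  shows "\<forall>a\<in>Lam U. \<forall>b\<in>Lam U. \<forall>i<m. Jn i a \<bullet> b = 0"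
  unfolding Lam_def
proof (rule iso_span, intro ballI allI impI)
  fix a b i assume a: "a \<in> LG U" and b: "b \<in> LG U" and i: "i < m"
  have ww: "w \<bullet> u = 0" if "w \<in> E" "\<forall>u\<in>U. w \<bullet> u = 0" "u \<in> U" for w u using that by auto
  from a obtain xs x where ax: "a = pr xs x" "set xs \<subseteq> {..<m}" "x \<in> E"
    "(even (length xs) \<and> x \<in> U) \<or> (odd (length xs) \<and> (\<forall>u\<in>U. x \<bullet> u = 0))"
    unfolding LG_def using U by blast
  from b obtain ys y where bq: "b = pr ys y" "set ys \<subseteq> {..<m}" "y \<in> E"
    "(even (length ys) \<and> y \<in> U) \<or> (odd (length ys) \<and> (\<forall>u\<in>U. y \<bullet> u = 0))"
    unfolding LG_def using U by blast
  have Ja: "Jn i a = pr (i # xs) x" using ax by simp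
  have xs': "set (i # xs) \<subseteq> {..<m}" using ax i by auto
  have "pr (i # xs) x \<bullet> pr ys y = 0"
    using ax(4) bq(4)
  proof (elim disjE conjE)
    assume "even (length xs)" "even (length ys)"
    thus ?thesis using GO[OF xs' bq(2) ax(3) bq(3)] by simp
  next
    assume "even (length xs)" "x \<in> U" "odd (length ys)" "\<forall>u\<in>U. y \<bullet> u = 0"
    thus ?thesis using Gram0[OF xs' bq(2) ax(3) bq(3)] by (simp add: inner_commute)
  next
    assume "odd (length xs)" "\<forall>u\<in>U. x \<bullet> u = 0" "even (length ys)" "y \<in> U"
    thus ?thesis using Gram0[OF xs' bq(2) ax(3) bq(3)] by simp
  next
    assume "odd (length xs)" "odd (length ys)"
    thus ?thesis using GO[OF xs' bq(2) ax(3) bq(3)] by simp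
  qed
  thus "Jn i a \<bullet> b = 0" using Ja bq(1) by simp
qed

lemma sum_mem: "a \<in> A \<Longrightarrow> b \<in> B \<Longrightarrow> a + b \<in> {x + y | x y. x \<in> A \<and> y \<in> B}" by blast

lemma Lam_cover:
  assumes U: "subspace U" "U \<subseteq> E"
  shows "{x + y | x y. x \<in> Lam U \<and> y \<in> Jn 0 ` Lam U} = UNIV"
proof -
  let ?S = "{x + y | x y. x \<in> Lam U \<and> y \<in> Jn 0 ` Lam U}"
  have sL: "subspace (Lam U)" unfolding Lam_def by simp
  have sS: "subspace ?S" by (rule subspace_sums[OF sL linear_subspace_image[OF Jn_lin sL]])
  have m0: "0 < m" by (rule m_pos)
  have flip: "pr xs v = Jn 0 (- pr (0 # xs) v)" for xs v
    using Jn_sq[OF m0, of "pr xs v"] by (simp add: Jn_neg)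
  have "GEN \<subseteq> ?S"
  proof
    fix g assume "g \<in> GEN"
    then obtain xs x where g: "g = pr xs x" "set xs \<subseteq> {..<m}" "x \<in> E" unfolding GEN_def by blast
    obtain u w where uw: "u \<in> span U" "\<And>z. z \<in> span U \<Longrightarrow> orthogonal w z" "x = u + w"
      using orthogonal_subspace_decomp_exists by blast
    have uU: "u \<in> U" using uw(1) U(1) span_eq_iff by blast
    have wE: "w \<in> E" using uw(3) uU U(2) g(3) subspace_E
      by (metis add_diff_cancel_left' subsetD subspace_diff)
    have wperp: "\<forall>z\<in>U. w \<bullet> z = 0" using uw(2) span_base by (auto simp: orthogonal_def)
    have xs0: "set (0 # xs) \<subseteq> {..<m}" using g(2) m0 by auto
    have gsum: "g = pr xs u + pr xs w" using g uw(3) by (simp add: pr_add)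
    show "g \<in> ?S"
    proof (cases "even (length xs)")
      case True
      have "pr xs u \<in> Lam U" unfolding Lam_def LG_def using True g(2) uU by (intro span_base) blast
      moreover have "pr (0 # xs) w \<in> Lam U" unfolding Lam_def LG_def using True xs0 wE wperp
        by (intro span_base UnI2 CollectI exI[of _ "0 # xs"] exI[of _ w]) auto
      hence "- pr (0 # xs) w \<in> Lam U" using sL by (simp add: subspace_neg)
      ultimately show ?thesis unfolding gsum flip[of xs w] by (intro sum_mem imageI)
    next
      case False
      have "pr xs w \<in> Lam U" unfolding Lam_def LG_def using False g(2) wE wperp
        by (intro span_base UnI2 CollectI exI[of _ xs] exI[of _ w]) auto
      moreover have "pr (0 # xs) u \<in> Lam U" unfolding Lam_def LG_def using False xs0 uU
        by (intro span_base UnI1 CollectI exI[of _ "0 # xs"] exI[of _ u]) auto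
      hence "- pr (0 # xs) u \<in> Lam U" using sL by (simp add: subspace_neg)
      ultimately show ?thesis unfolding gsum flip[of xs u] by (subst add.commute) (intro sum_mem imageI)
    qed
  qed
  hence "span GEN \<subseteq> ?S" using span_minimal sS by blast
  thus ?thesis using span_GEN by auto
qed

lemma Lam_Lag:
  assumes U: "subspace U" "U \<subseteq> E"
  shows "Lam U \<in> Lag J"
proof -
  have sL: "subspace (Lam U)" unfolding Lam_def by simp
  have iso: "\<forall>a\<in>Lam U. \<forall>b\<in>Lam U. \<forall>i<m. Jn i a \<bullet> b = 0" using Lam_iso[OF U(2)] .
  have "dim {x + y | x y. x \<in> Lam U \<and> y \<in> Jn 0 ` Lam U} = 2 * dim (Lam U)"
    using dim_pair[OF sL m_pos] iso m_pos by blast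
  hence "2 * dim (Lam U) = DIM('v)" using Lam_cover[OF U] by simp
  thus ?thesis unfolding Lag_iff using sL iso by blast
qed

end


context cliff8 begin

lemma Lam_E:
  assumes U: "subspace U" "U \<subseteq> E"
  shows "Lam U \<inter> E = U"
proof
  show "U \<subseteq> Lam U \<inter> E"
  proof
    fix u assume u: "u \<in> U"
    have "pr [] u \<in> LG U" unfolding LG_def using u by (intro UnI1 CollectI exI[of _ "[]"] exI[of _ u]) auto
    hence "u \<in> Lam U" unfolding Lam_def by (simp add: span_base)
    thus "u \<in> Lam U \<inter> E" using u U(2) by auto
  qed
next
  have "P ` LG U \<subseteq> U"
  proof
    fix y assume "y \<in> P ` LG U"
    then obtain g where g: "g \<in> LG U" "y = P g" by blast
    show "y \<in> U"
      using g(1) unfolding LG_def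
    proof (elim UnE CollectE exE conjE)
      fix xs u assume "g = pr xs u" "set xs \<subseteq> {..<m}" "u \<in> U"
      then obtain \<kappa> where "P (pr xs u) = \<kappa> *\<^sub>R u" using PK U(2) by blast
      thus "y \<in> U" using g(2) \<open>g = pr xs u\<close> \<open>u \<in> U\<close> U(1) by (simp add: subspace_scale)
    next
      fix xs w assume "g = pr xs w" "set xs \<subseteq> {..<m}" "odd (length xs)" "w \<in> E"
      thus "y \<in> U" using g(2) P_odd U(1) by (simp add: subspace_0)
    qed
  qed
  hence "span (P ` LG U) \<subseteq> U" using U(1) span_minimal by blast
  hence PL: "P ` Lam U \<subseteq> U" unfolding Lam_def using linear_span_image[OF P_lin] by simp
  show "Lam U \<inter> E \<subseteq> U"
  proof
    fix x assume "x \<in> Lam U \<inter> E"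
    hence "P x = x" "P x \<in> U" using P_E PL by auto
    thus "x \<in> U" by simp
  qed
qed

lemma even_pr_L:
  assumes L: "subspace L" "\<And>a b x. a < m \<Longrightarrow> b < m \<Longrightarrow> x \<in> L \<Longrightarrow> Jn a (Jn b x) \<in> L"
  shows "set xs \<subseteq> {..<m} \<Longrightarrow> even (length xs) \<Longrightarrow> x \<in> L \<Longrightarrow> pr xs x \<in> L"
proof (induction xs rule: induct_list012)
  case 1 then show ?case by simp
next
  case (2 a) then show ?case by simp
next
  case (3 a b zs)
  thus ?case using L(2) by auto
qed

lemma Lag_struct:
  assumes L: "L \<in> Lag J"
  shows "L = Lam (L \<inter> E)"
proof -
  have sL: "subspace L" and iso: "\<forall>u\<in>L. \<forall>v\<in>L. \<forall>i<m. Jn i u \<bullet> v = 0" and dL: "2 * dim L = DIM('v)"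
    using L unfolding Lag_iff by auto
  have cover: "{x + y | x y. x \<in> L \<and> y \<in> Jn a ` L} = UNIV" if a: "a < m" for a
  proof -
    let ?S = "{x + y | x y. x \<in> L \<and> y \<in> Jn a ` L}"
    have sS: "subspace ?S" by (rule subspace_sums[OF sL linear_subspace_image[OF Jn_lin sL]])
    have "dim ?S = 2 * dim L" using dim_pair[OF sL a] iso a by blast
    hence "dim ?S = DIM('v)" using dL by simp
    hence "span ?S = UNIV" by (simp add: dim_eq_full)
    moreover have "span ?S = ?S" using sS by (simp only: span_eq_iff)
    ultimately show ?thesis by simp
  qed
  have decomp: "\<exists>l l'. l \<in> L \<and> l' \<in> L \<and> v = l + Jn a l'" if "a < m" for a v
  proof -
    have "v \<in> {x + y | x y. x \<in> L \<and> y \<in> Jn a ` L}" using cover[OF that] by simp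
    thus ?thesis by blast
  qed
  have even2: "Jn a (Jn b x) \<in> L" if ab: "a < m" "b < m" and x: "x \<in> L" for a b x
  proof -
    obtain l l' where ll: "l \<in> L" "l' \<in> L" "Jn a (Jn b x) = l + Jn a l'" using decomp[OF ab(1)] by blast
    have "Jn a l' \<bullet> Jn a y = 0" if y: "y \<in> L" for y
    proof -
      have "Jn a (Jn b x) \<bullet> Jn a y = Jn b x \<bullet> y" by (rule Jn_norm[OF ab(1)])
      also have "\<dots> = 0" using iso x y ab by auto
      finally have 1: "Jn a (Jn b x) \<bullet> Jn a y = 0" .
      have "l \<bullet> Jn a y = - (Jn a l \<bullet> y)" using Jn_skew[of a y l] by (simp add: inner_commute)
      also have "\<dots> = 0" using iso ll(1) y ab by auto
      finally have 2: "l \<bullet> Jn a y = 0" by simp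
      show ?thesis using 1 2 ll(3) by (simp add: inner_add_left)
    qed
    hence "Jn a l' \<bullet> Jn a l' = 0" using ll(2) by blast
    hence "l' \<bullet> l' = 0" using Jn_norm[OF ab(1)] by simp
    hence "l' = 0" by simp
    thus ?thesis using ll by (simp add: Jn_zero)
  qed
  have evL: "pr xs x \<in> L" if "set xs \<subseteq> {..<m}" "even (length xs)" "x \<in> L" for xs x
    using even_pr_L[OF sL even2] that by blast
  have gL: "pr g x \<in> L" if "g \<in> set gs" "x \<in> L" for g x
    using evL[OF g_props(1)[OF that(1)] _ that(2)] g_props(3)[OF that(1)] by auto
  have PL: "P x \<in> L \<inter> E" if "x \<in> L" for x using P_closed[OF sL gL that] P_in_E by auto
  have sLE: "subspace (L \<inter> E)" using sL subspace_E by (rule subspace_inter)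
  have LLag: "Lam (L \<inter> E) \<in> Lag J" using Lam_Lag[OF sLE] by blast
  have sub: "Lam (L \<inter> E) \<subseteq> L"
    unfolding Lam_def
  proof (rule span_minimal[OF _ sL], rule subsetI)
    fix g assume "g \<in> LG (L \<inter> E)"
    thus "g \<in> L" unfolding LG_def
    proof (elim UnE CollectE exE conjE)
      fix xs u assume "g = pr xs u" "set xs \<subseteq> {..<m}" "even (length xs)" "u \<in> L \<inter> E"
      thus "g \<in> L" using evL by auto
    next
      fix xs w assume g: "g = pr xs w" "set xs \<subseteq> {..<m}" "odd (length xs)" "w \<in> E"
        "\<forall>u\<in>L \<inter> E. w \<bullet> u = 0"
      have wL: "w \<bullet> l = 0" if "l \<in> L" for l
      proof -
        have "w \<bullet> l = P w \<bullet> l" using P_E[OF g(4)] by simp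
        also have "\<dots> = w \<bullet> P l" by (rule P_sym)
        also have "\<dots> = 0" using g(5) PL[OF that] by auto
        finally show ?thesis .
      qed
      obtain l l' where ll: "l \<in> L" "l' \<in> L" "w = l + Jn 0 l'" using decomp[OF m_pos] by blast
      have "l \<bullet> l = 0"
      proof -
        have "0 = w \<bullet> l" using wL[OF ll(1)] by simp
        also have "\<dots> = l \<bullet> l + Jn 0 l' \<bullet> l" using ll(3) by (simp add: inner_add_left)
        also have "Jn 0 l' \<bullet> l = 0" using iso ll m_pos by auto
        finally show ?thesis by simp
      qed
      hence "w = Jn 0 l'" using ll by simp
      hence "g = pr (xs @ [0]) l'" using g(1) by (simp add: pr_append)
      moreover have "set (xs @ [0]) \<subseteq> {..<m}" using g(2) m_pos by auto
      ultimately show "g \<in> L" using evL[of "xs @ [0]" l'] g(3) ll(2) by simp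
    qed
  qed
  have "dim L \<le> dim (Lam (L \<inter> E))" using LLag dL unfolding Lag_iff by auto
  moreover have "subspace (Lam (L \<inter> E))" unfolding Lam_def by simp
  ultimately show ?thesis using subspace_dim_equal[OF _ sL sub] by simp
qed

end


context cliff8 begin

lemma hb_coord: "i < m \<Longrightarrow> hbracket J u v \<bullet> e i = Jn i u \<bullet> v"
  unfolding hbracket_def Jn_def using e_in
  by (simp add: inner_sum_left inner_Basis if_distrib cong: if_cong)

lemma Aut_J: assumes "\<xi> \<in> Aut_o J" "i < m" shows "Jn i (\<xi> u) \<bullet> \<xi> v = Jn i u \<bullet> v"
proof -
  have "hbracket J (\<xi> u) (\<xi> v) = hbracket J u v" using assms(1) unfolding Aut_o_def by auto
  thus ?thesis using hb_coord[OF assms(2)] by metis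
qed

lemma Aut_lin: "\<xi> \<in> Aut_o J \<Longrightarrow> linear \<xi>" unfolding Aut_o_def by auto
lemma Aut_bij: "\<xi> \<in> Aut_o J \<Longrightarrow> bij \<xi>" unfolding Aut_o_def by auto

lemma Aut_even:
  assumes A: "\<xi> \<in> Aut_o J" and ab: "a < m" "b < m"
  shows "Jn a (Jn b (\<xi> u)) = \<xi> (Jn a (Jn b u))"
proof -
  have lin: "linear \<xi>" using Aut_lin[OF A] .
  define \<eta> where "\<eta> = adjoint \<xi>"
  have adj: "x \<bullet> \<eta> y = \<xi> x \<bullet> y" for x y unfolding \<eta>_def by (rule adjoint_works[OF lin])
  have linh: "linear \<eta>" unfolding \<eta>_def by (rule adjoint_linear[OF lin])
  have key: "\<eta> (Jn c (\<xi> w)) = Jn c w" if c: "c < m" for w c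
  proof (rule inner_all_eq)
    fix v
    have "\<eta> (Jn c (\<xi> w)) \<bullet> v = v \<bullet> \<eta> (Jn c (\<xi> w))" by (simp add: inner_commute)
    also have "\<dots> = \<xi> v \<bullet> Jn c (\<xi> w)" by (rule adj)
    also have "\<dots> = Jn c (\<xi> w) \<bullet> \<xi> v" by (simp add: inner_commute)
    also have "\<dots> = Jn c w \<bullet> v" by (rule Aut_J[OF A c])
    finally show "\<eta> (Jn c (\<xi> w)) \<bullet> v = Jn c w \<bullet> v" .
  qed
  have injh: "y = 0" if "\<eta> y = 0" for y
  proof -
    obtain x where "\<xi> x = y" using Aut_bij[OF A] by (metis bij_pointE)
    hence "y \<bullet> y = x \<bullet> \<eta> y" using adj by simp
    thus ?thesis using that by simp
  qed
  have "\<eta> (Jn a (Jn a (Jn b (\<xi> u)))) = \<eta> (- Jn b (\<xi> u))" using Jn_sq[OF ab(1)] by simp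
  also have "\<dots> = - \<eta> (Jn b (\<xi> u))" using linear_neg[OF linh] by simp
  also have "\<dots> = - Jn b u" using key[OF ab(2)] by simp
  finally have 1: "\<eta> (Jn a (Jn a (Jn b (\<xi> u)))) = - Jn b u" .
  have "\<eta> (Jn a (\<xi> (Jn a (Jn b u)))) = Jn a (Jn a (Jn b u))" using key[OF ab(1)] by simp
  also have "\<dots> = - Jn b u" using Jn_sq[OF ab(1)] by simp
  finally have 2: "\<eta> (Jn a (\<xi> (Jn a (Jn b u)))) = - Jn b u" .
  have "\<eta> (Jn a (Jn a (Jn b (\<xi> u))) - Jn a (\<xi> (Jn a (Jn b u)))) = 0"
    using linear_diff[OF linh] 1 2 by simp
  hence "Jn a (Jn a (Jn b (\<xi> u))) - Jn a (\<xi> (Jn a (Jn b u))) = 0" using injh by blast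
  hence "Jn a (Jn a (Jn b (\<xi> u)) - \<xi> (Jn a (Jn b u))) = Jn a 0" by (simp add: Jn_diff Jn_zero)
  hence "Jn a (Jn b (\<xi> u)) - \<xi> (Jn a (Jn b u)) = 0" using Jn_inj[OF ab(1)] by blast
  hence "Jn a (Jn b (\<xi> u)) = \<xi> (Jn a (Jn b u))" by simp
  thus ?thesis .
qed

lemma Aut_pr_even:
  assumes A: "\<xi> \<in> Aut_o J"
  shows "set xs \<subseteq> {..<m} \<Longrightarrow> even (length xs) \<Longrightarrow> \<xi> (pr xs v) = pr xs (\<xi> v)"
proof (induction xs rule: induct_list012)
  case 1 then show ?case by simp
next
  case (2 a) then show ?case by simp
next
  case (3 a b zs)
  have ab: "a < m" "b < m" using "3.prems" by auto
  have "\<xi> (pr zs v) = pr zs (\<xi> v)" using 3 by auto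
  thus ?case using Aut_even[OF A ab, of "pr zs v"] by simp
qed

lemma Aut_E: assumes A: "\<xi> \<in> Aut_o J" and x: "x \<in> E" shows "\<xi> x \<in> E"
proof -
  have "pr g (\<xi> x) = \<xi> x" if g: "g \<in> set gs" for g
  proof -
    have "even (length g)" using g_props(3)[OF g] by auto
    hence "\<xi> (pr g x) = pr g (\<xi> x)" using Aut_pr_even[OF A g_props(1)[OF g]] by blast
    thus ?thesis using x g by (simp add: E_def)
  qed
  thus ?thesis by (simp add: E_def)
qed

lemma Aut_inv: assumes A: "\<xi> \<in> Aut_o J" shows "inv_into UNIV \<xi> \<in> Aut_o J"
proof -
  have b: "bij \<xi>" and l: "linear \<xi>" using A by (auto simp: Aut_o_def)
  have "linear (inv_into UNIV \<xi>)" using inj_linear_imp_inv_linear[OF l] b by (simp add: bij_is_inj)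
  moreover have "bij (inv_into UNIV \<xi>)" using b by (rule bij_imp_bij_inv)
  moreover have "hbracket J (inv_into UNIV \<xi> u) (inv_into UNIV \<xi> v) = hbracket J u v" for u v
  proof -
    have h: "hbracket J (\<xi> x) (\<xi> y) = hbracket J x y" for x y using A unfolding Aut_o_def by blast
    have "\<xi> (inv_into UNIV \<xi> u) = u" "\<xi> (inv_into UNIV \<xi> v) = v" using b by (simp_all add: bij_is_surj surj_f_inv_f)
    thus ?thesis using h[of "inv_into UNIV \<xi> u" "inv_into UNIV \<xi> v"] by simp
  qed
  ultimately show ?thesis unfolding Aut_o_def by blast
qed

lemma Aut_Lag:
  assumes A: "\<xi> \<in> Aut_o J" and L: "L \<in> Lag J"
  shows "\<xi> ` L \<in> Lag J"
proof -
  have l: "linear \<xi>" and b: "bij \<xi>" using A by (auto simp: Aut_o_def)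
  have sL: "subspace L" and iso: "\<forall>u\<in>L. \<forall>v\<in>L. \<forall>i<m. Jn i u \<bullet> v = 0" and dL: "2 * dim L = DIM('v)"
    using L unfolding Lag_iff by auto
  have "subspace (\<xi> ` L)" using linear_subspace_image[OF l sL] .
  moreover have "\<forall>u\<in>\<xi> ` L. \<forall>v\<in>\<xi> ` L. \<forall>i<m. Jn i u \<bullet> v = 0" using iso Aut_J[OF A] by auto
  moreover have "dim (\<xi> ` L) = dim L" using dim_image_eq[OF l] b by (metis bij_is_inj inj_on_subset subset_UNIV)
  ultimately show ?thesis unfolding Lag_iff using dL by simp
qed

lemma Aut_LE:
  assumes A: "\<xi> \<in> Aut_o J"
  shows "\<xi> ` L \<inter> E = \<xi> ` (L \<inter> E)"
proof
  show "\<xi> ` (L \<inter> E) \<subseteq> \<xi> ` L \<inter> E" using Aut_E[OF A] by auto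
  show "\<xi> ` L \<inter> E \<subseteq> \<xi> ` (L \<inter> E)"
  proof
    fix y assume y: "y \<in> \<xi> ` L \<inter> E"
    then obtain x where x: "x \<in> L" "y = \<xi> x" by auto
    have b: "bij \<xi>" using A by (simp add: Aut_o_def)
    have "inv_into UNIV \<xi> y = x" using x b by (simp add: bij_is_inj)
    moreover have "inv_into UNIV \<xi> y \<in> E" using Aut_E[OF Aut_inv[OF A]] y by auto
    ultimately show "y \<in> \<xi> ` (L \<inter> E)" using x by auto
  qed
qed

lemma Aut_dimLE:
  assumes A: "\<xi> \<in> Aut_o J"
  shows "dim (\<xi> ` L \<inter> E) = dim (L \<inter> E)"
proof -
  have l: "linear \<xi>" and b: "bij \<xi>" using A by (auto simp: Aut_o_def)
  show ?thesis unfolding Aut_LE[OF A] using dim_image_eq[OF l] b by (metis bij_is_inj inj_on_subset subset_UNIV)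
qed

end


context cliff8 begin

lemma invsub_inv: assumes "invsub M" shows "invariant_subspace J M"
proof -
  have sM: "subspace M" using assms by (simp add: invsub_def)
  have "J z x \<in> M" if "x \<in> M" for z x
  proof -
    have "J z x = (\<Sum>i<m. (z \<bullet> e i) *\<^sub>R Jn i x)" by (rule J_expand)
    also have "\<dots> \<in> M" using assms that unfolding invsub_def
      by (intro subspace_sum[OF sM] subspace_scale[OF sM]) auto
    finally show ?thesis .
  qed
  thus ?thesis unfolding invariant_subspace_def using sM by auto
qed

lemma inv_invsub: "invariant_subspace J M \<Longrightarrow> invsub M"
  unfolding invariant_subspace_def invsub_def Jn_def by auto

lemma irr_basis:
  assumes W: "irreducible_submodule J W"
  shows "\<exists>x. x \<in> W \<inter> E \<and> x \<bullet> x = 1 \<and> W \<inter> E \<subseteq> span {x}"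
proof -
  have iW: "invsub W" and nz: "W \<noteq> {0}" and sW: "subspace W"
    and irr: "\<And>U. invariant_subspace J U \<Longrightarrow> U \<subseteq> W \<Longrightarrow> U = {0} \<or> U = W"
    using W unfolding irreducible_submodule_def by (auto intro: inv_invsub simp: invariant_subspace_def)
  obtain w where w: "w \<in> W" "w \<noteq> 0" using nz sW subspace_0 by blast
  obtain y where y: "y \<in> W" "y \<noteq> 0" "y \<in> E" using meet[OF iW w] by blast
  define x where "x = (1 / norm y) *\<^sub>R y"
  have xW: "x \<in> W" unfolding x_def using sW y(1) by (simp add: subspace_scale)
  have xE: "x \<in> E" unfolding x_def using subspace_E y(3) by (simp add: subspace_scale)
  have x1: "x \<bullet> x = 1" unfolding x_def using y(2) by (simp add: power2_norm_eq_inner[symmetric] divide_simps)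
  define M where "M = span {pr xs x | xs. set xs \<subseteq> {..<m}}"
  have sM: "subspace M" unfolding M_def by simp
  have iM: "invsub M" unfolding invsub_def
  proof (intro conjI sM allI impI ballI)
    fix i v assume i: "i < m" and v: "v \<in> M"
    show "Jn i v \<in> M" unfolding M_def
    proof (rule Jn_span_closed[OF i _ v[unfolded M_def]])
      fix u assume "u \<in> {pr xs x | xs. set xs \<subseteq> {..<m}}"
      then obtain xs where "u = pr xs x" "set xs \<subseteq> {..<m}" by blast
      hence "Jn i u \<in> {pr xs x | xs. set xs \<subseteq> {..<m}}" using i by (auto intro!: exI[of _ "i # xs"])
      thus "Jn i u \<in> span {pr xs x | xs. set xs \<subseteq> {..<m}}" by (rule span_base)
    qed
  qed
  have MW: "M \<subseteq> W" unfolding M_def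
    by (rule span_minimal[OF _ sW]) (use invsub_pr[OF iW] xW in auto)
  have xM: "x \<in> M" unfolding M_def by (rule span_base) (auto intro: exI[of _ "[]"])
  have "M \<noteq> {0}" using xM x1 by auto
  hence MeqW: "M = W" using irr[OF invsub_inv[OF iM] MW] by auto
  have "P ` {pr xs x | xs. set xs \<subseteq> {..<m}} \<subseteq> span {x}"
  proof
    fix v assume "v \<in> P ` {pr xs x | xs. set xs \<subseteq> {..<m}}"
    then obtain xs where v: "v = P (pr xs x)" "set xs \<subseteq> {..<m}" by blast
    then obtain \<kappa> where "P (pr xs x) = \<kappa> *\<^sub>R x" using PK xE by blast
    thus "v \<in> span {x}" using v by (simp add: span_base span_scale)
  qed
  hence "P ` M \<subseteq> span {x}" unfolding M_def linear_span_image[OF P_lin, symmetric]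
    by (simp add: span_minimal)
  hence "W \<inter> E \<subseteq> span {x}" using MeqW P_E by force
  thus ?thesis using xW xE x1 by blast
qed

lemma E_basis:
  assumes S: "sum_of_irreducibles J p"
  shows "\<exists>xb. (\<forall>i<p. xb i \<in> E) \<and> (\<forall>i<p. \<forall>j<p. xb i \<bullet> xb j = (if i = j then 1 else 0))
             \<and> span (xb ` {..<p}) = E"
proof -
  obtain W where W: "\<forall>i<p. irreducible_submodule J (W i)"
    "\<forall>i<p. \<forall>j<p. i \<noteq> j \<longrightarrow> (\<forall>u\<in>W i. \<forall>v\<in>W j. u \<bullet> v = 0)" "span (\<Union>i<p. W i) = UNIV"
    using S unfolding sum_of_irreducibles_def by blast
  define xb where "xb i = (SOME x. x \<in> W i \<inter> E \<and> x \<bullet> x = 1 \<and> W i \<inter> E \<subseteq> span {x})" for i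
  have xb: "xb i \<in> W i \<inter> E \<and> xb i \<bullet> xb i = 1 \<and> W i \<inter> E \<subseteq> span {xb i}" if "i < p" for i
    unfolding xb_def by (rule someI_ex) (use irr_basis W(1) that in blast)
  have on: "\<forall>i<p. \<forall>j<p. xb i \<bullet> xb j = (if i = j then 1 else 0)"
    using xb W(2) by auto
  have "E \<subseteq> span (xb ` {..<p})"
  proof
    fix v assume v: "v \<in> E"
    have "P ` (\<Union>i<p. W i) \<subseteq> span (xb ` {..<p})"
    proof
      fix y assume "y \<in> P ` (\<Union>i<p. W i)"
      then obtain i w where iw: "i < p" "w \<in> W i" "y = P w" by blast
      have iW: "invsub (W i)" using W(1) iw(1) unfolding irreducible_submodule_def by (auto intro: inv_invsub)
      have "P w \<in> W i" using P_closed[of "W i"] iW iw(2) invsub_pr[OF iW] g_props(1)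
        by (auto simp: invsub_def)
      hence "P w \<in> span {xb i}" using xb[OF iw(1)] P_in_E by blast
      moreover have "span {xb i} \<subseteq> span (xb ` {..<p})" using iw(1) by (intro span_mono) auto
      ultimately show "y \<in> span (xb ` {..<p})" using iw(3) by blast
    qed
    hence "span (P ` (\<Union>i<p. W i)) \<subseteq> span (xb ` {..<p})" by (simp add: span_minimal)
    hence "P ` UNIV \<subseteq> span (xb ` {..<p})" using W(3) linear_span_image[OF P_lin] by metis
    thus "v \<in> span (xb ` {..<p})" using P_E[OF v] by (metis image_subset_iff UNIV_I)
  qed
  moreover have "span (xb ` {..<p}) \<subseteq> E" using xb subspace_E by (intro span_minimal) auto
  ultimately show ?thesis using xb on by (intro exI[of _ xb]) auto
qed

end


definition ON :: "nat \<Rightarrow> (nat \<Rightarrow> 'v::euclidean_space) \<Rightarrow> bool" where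
  "ON p f \<longleftrightarrow> (\<forall>i<p. \<forall>j<p. f i \<bullet> f j = (if i = j then 1 else 0))"

lemma ON_inj: "ON p f \<Longrightarrow> inj_on f {..<p}"
  unfolding ON_def inj_on_def by (metis lessThan_iff zero_neq_one)

lemma ON_indep: "ON p f \<Longrightarrow> independent (f ` {..<p})"
proof (rule pairwise_orthogonal_independent)
  assume o: "ON p f"
  show "pairwise orthogonal (f ` {..<p})" using o unfolding ON_def pairwise_def orthogonal_def by auto
  show "0 \<notin> f ` {..<p}" using o unfolding ON_def by force
qed

lemma ON_card: "ON p f \<Longrightarrow> card (f ` {..<p}) = p"
  using ON_inj card_image by fastforce

lemma ON_dim: "ON p f \<Longrightarrow> dim (span (f ` {..<p})) = p"
  using ON_indep ON_card dim_span dim_eq_card_independent by metis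

lemma ON_sum_inner: assumes "ON p f" "j < p" shows "(\<Sum>i<p. c i *\<^sub>R f i) \<bullet> f j = c j"
proof -
  have "(\<Sum>i<p. c i *\<^sub>R f i) \<bullet> f j = (\<Sum>i<p. c i * (f i \<bullet> f j))" by (simp add: inner_sum_left)
  also have "\<dots> = (\<Sum>i<p. if i = j then c i else 0)"
    using assms unfolding ON_def by (intro sum.cong) auto
  also have "\<dots> = c j" using assms(2) by simp
  finally show ?thesis .
qed

lemma ON_expand:
  assumes o: "ON p f" and v: "v \<in> span (f ` {..<p})"
  shows "v = (\<Sum>i<p. (v \<bullet> f i) *\<^sub>R f i)"
proof -
  let ?d = "v - (\<Sum>i<p. (v \<bullet> f i) *\<^sub>R f i)"
  have "(\<Sum>i<p. (v \<bullet> f i) *\<^sub>R f i) \<in> span (f ` {..<p})"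
    by (intro span_sum span_scale span_base) auto
  hence dS: "?d \<in> span (f ` {..<p})" using v by (intro span_diff)
  have "?d \<bullet> f j = 0" if "j < p" for j using ON_sum_inner[OF o that] by (simp add: inner_diff_left)
  hence "span (f ` {..<p}) \<subseteq> {x. ?d \<bullet> x = 0}"
    by (intro span_minimal) (auto simp: subspace_def inner_add_right)
  hence "?d \<bullet> ?d = 0" using dS by blast
  thus ?thesis by simp
qed

lemma ON_parseval:
  assumes o: "ON p f" and v: "v \<in> span (f ` {..<p})" and w: "w \<in> span (f ` {..<p})"
  shows "v \<bullet> w = (\<Sum>i<p. (v \<bullet> f i) * (w \<bullet> f i))"
proof -
  have "v \<bullet> w = (\<Sum>i<p. (v \<bullet> f i) *\<^sub>R f i) \<bullet> w" using ON_expand[OF o v] by simp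
  also have "\<dots> = (\<Sum>i<p. (v \<bullet> f i) * (f i \<bullet> w))" by (simp add: inner_sum_left)
  also have "\<dots> = (\<Sum>i<p. (v \<bullet> f i) * (w \<bullet> f i))" by (simp add: inner_commute)
  finally show ?thesis .
qed

lemma ON_span_eq:
  assumes o: "ON p f" and sV: "subspace V" and fV: "\<forall>i<p. f i \<in> V" and d: "dim V = p"
  shows "span (f ` {..<p}) = V"
proof -
  have "V \<subseteq> span (f ` {..<p})"
    using card_eq_dim[of "f ` {..<p}" V] ON_card[OF o] d fV ON_indep[OF o] by auto
  moreover have "span (f ` {..<p}) \<subseteq> V" using fV sV by (intro span_minimal) auto
  ultimately show ?thesis by blast
qed

locale cliffB = cliff8 J e m k for J :: "'z::euclidean_space \<Rightarrow> 'v::euclidean_space \<Rightarrow> 'v" and e m k +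
  fixes p :: nat and xb :: "nat \<Rightarrow> 'v"
  assumes xb_E: "\<forall>i<p. xb i \<in> E" and xb_on: "ON p xb" and xb_span: "span (xb ` {..<p}) = E"
begin

lemma dimE: "dim E = p" using ON_dim[OF xb_on] xb_span by simp

lemma E_expand: "v \<in> E \<Longrightarrow> v = (\<Sum>i<p. (v \<bullet> xb i) *\<^sub>R xb i)"
  using ON_expand[OF xb_on] xb_span by simp

lemma E_parseval: "v \<in> E \<Longrightarrow> w \<in> E \<Longrightarrow> v \<bullet> w = (\<Sum>i<p. (v \<bullet> xb i) * (w \<bullet> xb i))"
  using ON_parseval[OF xb_on] xb_span by simp

definition orthm :: "(nat \<Rightarrow> nat \<Rightarrow> real) \<Rightarrow> bool" where
  "orthm Q \<longleftrightarrow> Q \<in> carrier (orth_group p)"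

lemma orthm_iff: "orthm Q \<longleftrightarrow> (\<forall>i j. \<not> (i < p \<and> j < p) \<longrightarrow> Q i j = 0) \<and>
    (\<forall>i<p. \<forall>j<p. (\<Sum>k<p. Q i k * Q j k) = (if i = j then 1 else 0))"
proof -
  have "mat_mult p Q (\<lambda>i j. Q j i) = mat_one p \<longleftrightarrow> (\<forall>i<p. \<forall>j<p. (\<Sum>k<p. Q i k * Q j k) = (if i = j then 1 else 0))"
    unfolding mat_mult_def mat_one_def by (auto simp: fun_eq_iff)
  thus ?thesis unfolding orthm_def orth_group_def by auto
qed

lemma orthm_cols:
  assumes "orthm Q"
  shows "\<forall>i<p. \<forall>j<p. (\<Sum>k<p. Q k i * Q k j) = (if i = j then 1 else 0)"
proof -
  have Q: "\<forall>i<p. \<forall>j<p. (\<Sum>k<p. Q i k * Q j k) = (if i = j then 1 else 0)" using assms orthm_iff by blast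
  define r where "r k = (\<Sum>i<p. Q k i *\<^sub>R xb i)" for k
  have rE: "\<forall>k<p. r k \<in> E" unfolding r_def using xb_E subspace_E
    by (auto intro!: subspace_sum subspace_scale)
  have rxb: "r k \<bullet> xb i = Q k i" if "i < p" for k i unfolding r_def using ON_sum_inner[OF xb_on that] .
  have ron: "ON p r" unfolding ON_def
  proof (intro allI impI)
    fix i j assume ij: "i < p" "j < p"
    have "r i \<bullet> r j = (\<Sum>l<p. (r i \<bullet> xb l) * (r j \<bullet> xb l))" using E_parseval rE ij by blast
    also have "\<dots> = (\<Sum>l<p. Q i l * Q j l)" using rxb by simp
    finally show "r i \<bullet> r j = (if i = j then 1 else 0)" using Q ij by simp
  qed
  have rspan: "span (r ` {..<p}) = E" using ON_span_eq[OF ron subspace_E rE dimE] .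
  show ?thesis
  proof (intro allI impI)
    fix i j assume ij: "i < p" "j < p"
    have "xb i \<bullet> xb j = (\<Sum>k<p. (xb i \<bullet> r k) * (xb j \<bullet> r k))"
      using ON_parseval[OF ron] rspan xb_E ij by simp
    also have "\<dots> = (\<Sum>k<p. Q k i * Q k j)" using rxb ij by (simp add: inner_commute)
    finally show "(\<Sum>k<p. Q k i * Q k j) = (if i = j then 1 else 0)" using xb_on ij unfolding ON_def by simp
  qed
qed

definition TQ :: "(nat \<Rightarrow> nat \<Rightarrow> real) \<Rightarrow> 'v \<Rightarrow> 'v" where
  "TQ Q v = (\<Sum>j<p. (v \<bullet> xb j) *\<^sub>R (\<Sum>i<p. Q i j *\<^sub>R xb i))"

lemma TQ_lin: "linear (TQ Q)"
proof (rule linearI)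
  fix u v show "TQ Q (u + v) = TQ Q u + TQ Q v"
    by (simp add: TQ_def inner_add_left scaleR_add_left sum.distrib)
next
  fix c :: real and v show "TQ Q (c *\<^sub>R v) = c *\<^sub>R TQ Q v"
    by (simp add: TQ_def scaleR_sum_right mult.assoc)
qed

end


context cliffB begin

lemma TQ_coef: assumes i: "i < p" shows "TQ Q v \<bullet> xb i = (\<Sum>j<p. (v \<bullet> xb j) * Q i j)"
proof -
  have "TQ Q v \<bullet> xb i = (\<Sum>j<p. (v \<bullet> xb j) * ((\<Sum>ia<p. Q ia j *\<^sub>R xb ia) \<bullet> xb i))"
    unfolding TQ_def by (simp only: inner_sum_left inner_scaleR_left)
  also have "\<dots> = (\<Sum>j<p. (v \<bullet> xb j) * Q i j)" using ON_sum_inner[OF xb_on i] by simp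
  finally show ?thesis .
qed

lemma TQ_E: "TQ Q v \<in> E"
  unfolding TQ_def using xb_E subspace_E by (auto intro!: subspace_sum subspace_scale)

lemma TQ_xb: "j < p \<Longrightarrow> TQ Q (xb j) = (\<Sum>i<p. Q i j *\<^sub>R xb i)"
proof -
  assume j: "j < p"
  have "TQ Q (xb j) = (\<Sum>l<p. if l = j then (\<Sum>i<p. Q i l *\<^sub>R xb i) else 0)"
    unfolding TQ_def using xb_on j unfolding ON_def by (intro sum.cong) (auto simp: inner_commute)
  also have "\<dots> = (\<Sum>i<p. Q i j *\<^sub>R xb i)" using j by simp
  finally show ?thesis .
qed

lemma TQ_iso:
  assumes Q: "orthm Q" and v: "v \<in> E" and w: "w \<in> E"
  shows "TQ Q v \<bullet> TQ Q w = v \<bullet> w"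
proof -
  have C: "\<forall>i<p. \<forall>j<p. (\<Sum>k<p. Q k i * Q k j) = (if i = j then 1 else 0)" using orthm_cols[OF Q] .
  have "TQ Q v \<bullet> TQ Q w = (\<Sum>i<p. (TQ Q v \<bullet> xb i) * (TQ Q w \<bullet> xb i))"
    using E_parseval TQ_E by blast
  also have "\<dots> = (\<Sum>i<p. (\<Sum>j<p. (v \<bullet> xb j) * Q i j) * (\<Sum>l<p. (w \<bullet> xb l) * Q i l))"
    by (simp add: TQ_coef)
  also have "\<dots> = (\<Sum>i<p. \<Sum>j<p. \<Sum>l<p. (v \<bullet> xb j) * (w \<bullet> xb l) * (Q i j * Q i l))"
    by (simp add: sum_product algebra_simps)
  also have "\<dots> = (\<Sum>j<p. \<Sum>l<p. \<Sum>i<p. (v \<bullet> xb j) * (w \<bullet> xb l) * (Q i j * Q i l))"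
    by (rule trans[OF sum.swap], rule sum.cong[OF refl], rule sum.swap)
  also have "\<dots> = (\<Sum>j<p. \<Sum>l<p. (v \<bullet> xb j) * (w \<bullet> xb l) * (if j = l then 1 else 0))"
    using C by (simp add: sum_distrib_left[symmetric])
  also have "\<dots> = (\<Sum>j<p. (v \<bullet> xb j) * (w \<bullet> xb j))"
    by (simp add: if_distrib cong: if_cong)
  also have "\<dots> = v \<bullet> w" using E_parseval[OF v w] by simp
  finally show ?thesis .
qed

definition Hgrp :: "('v \<Rightarrow> 'v) set" where
  "Hgrp = {\<xi>. linear \<xi> \<and> (\<forall>u v. \<xi> u \<bullet> \<xi> v = u \<bullet> v) \<and> commJ \<xi>}"

definition phi :: "(nat \<Rightarrow> nat \<Rightarrow> real) \<Rightarrow> 'v \<Rightarrow> 'v" where "phi Q = ext (TQ Q)"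

lemma phi_props:
  assumes Q: "orthm Q"
  shows "phi Q \<in> Hgrp" "\<And>x. x \<in> E \<Longrightarrow> phi Q x = TQ Q x"
proof -
  have T: "linear (TQ Q)" "\<forall>x\<in>E. TQ Q x \<in> E" "\<forall>x\<in>E. \<forall>y\<in>E. TQ Q x \<bullet> TQ Q y = x \<bullet> y"
    using TQ_lin TQ_E TQ_iso[OF Q] by auto
  show "phi Q \<in> Hgrp" unfolding Hgrp_def phi_def commJ_def using ext_props[OF T] by blast
  show "phi Q x = TQ Q x" if "x \<in> E" for x unfolding phi_def using ext_props(4)[OF T that] .
qed

lemma H_lin: "\<xi> \<in> Hgrp \<Longrightarrow> linear \<xi>" unfolding Hgrp_def by auto
lemma H_iso: "\<xi> \<in> Hgrp \<Longrightarrow> \<xi> u \<bullet> \<xi> v = u \<bullet> v" unfolding Hgrp_def by auto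
lemma H_comm: "\<xi> \<in> Hgrp \<Longrightarrow> commJ \<xi>" unfolding Hgrp_def by auto

lemma H_inj: "\<xi> \<in> Hgrp \<Longrightarrow> inj \<xi>"
proof (rule injI)
  fix u v assume H: "\<xi> \<in> Hgrp" and eq: "\<xi> u = \<xi> v"
  have "\<xi> (u - v) = 0" using eq linear_diff[OF H_lin[OF H]] by simp
  hence "(u - v) \<bullet> (u - v) = 0" using H_iso[OF H, of "u - v" "u - v"] by simp
  thus "u = v" by simp
qed

lemma H_bij: "\<xi> \<in> Hgrp \<Longrightarrow> bij \<xi>"
  using H_inj linear_inj_imp_surj[OF H_lin] by (simp add: bij_def)

lemma H_Aut: assumes H: "\<xi> \<in> Hgrp" shows "\<xi> \<in> Aut_o J"
proof -
  have l: "linear \<xi>" using H_lin[OF H] .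
  have Jc: "J z (\<xi> u) = \<xi> (J z u)" for z u
  proof -
    have "J z (\<xi> u) = (\<Sum>i<m. (z \<bullet> e i) *\<^sub>R Jn i (\<xi> u))" by (rule J_expand)
    also have "\<dots> = (\<Sum>i<m. (z \<bullet> e i) *\<^sub>R \<xi> (Jn i u))" using H_comm[OF H] unfolding commJ_def by simp
    also have "\<dots> = \<xi> (\<Sum>i<m. (z \<bullet> e i) *\<^sub>R Jn i u)" by (simp add: linear_sum[OF l] linear_scale[OF l])
    also have "\<dots> = \<xi> (J z u)" using J_expand by simp
    finally show ?thesis .
  qed
  have "hbracket J (\<xi> u) (\<xi> v) = hbracket J u v" for u v
    unfolding hbracket_def using Jc H_iso[OF H] by simp
  thus ?thesis unfolding Aut_o_def using l H_bij[OF H] by blast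
qed

lemma H_id: "id \<in> Hgrp" unfolding Hgrp_def commJ_def by (auto simp: linear_id)

lemma H_comp: "\<xi> \<in> Hgrp \<Longrightarrow> \<eta> \<in> Hgrp \<Longrightarrow> \<xi> \<circ> \<eta> \<in> Hgrp"
  unfolding Hgrp_def commJ_def by (auto intro: linear_compose)

lemma H_invf: assumes H: "\<xi> \<in> Hgrp" shows "inv_into UNIV \<xi> \<in> Hgrp"
proof -
  have b: "bij \<xi>" using H_bij[OF H] .
  let ?i = "inv_into UNIV \<xi>"
  have fi: "\<xi> (?i y) = y" for y using b by (simp add: bij_is_surj surj_f_inv_f)
  have "linear ?i" using inj_linear_imp_inv_linear[OF H_lin[OF H] H_inj[OF H]] .
  moreover have "?i u \<bullet> ?i v = u \<bullet> v" for u v using H_iso[OF H, of "?i u" "?i v"] fi by simp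
  moreover have "commJ ?i" unfolding commJ_def
  proof (intro allI impI)
    fix i v assume i: "i < m"
    have "\<xi> (?i (Jn i v)) = \<xi> (Jn i (?i v))"
      using fi H_comm[OF H] i unfolding commJ_def by simp
    thus "?i (Jn i v) = Jn i (?i v)" using H_inj[OF H] by (simp add: inj_eq)
  qed
  ultimately show ?thesis unfolding Hgrp_def by blast
qed

lemma m_inv_Aut:
  assumes A: "\<xi> \<in> Aut_o J"
  shows "m_inv (Aut_group J) \<xi> = inv_into UNIV \<xi>"
proof -
  have b: "bij \<xi>" using Aut_bij[OF A] .
  let ?i = "inv_into UNIV \<xi>"
  have 1: "\<xi> \<circ> ?i = id" using b by (simp add: fun_eq_iff bij_is_surj surj_f_inv_f)
  have 2: "?i \<circ> \<xi> = id" using b by (simp add: fun_eq_iff bij_is_inj)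
  show ?thesis unfolding m_inv_def Aut_group_def map_group_def
  proof (simp, rule the_equality)
    show "?i \<in> Aut_o J \<and> \<xi> \<circ> ?i = id \<and> ?i \<circ> \<xi> = id" using Aut_inv[OF A] 1 2 by simp
    fix y assume y: "y \<in> Aut_o J \<and> \<xi> \<circ> y = id \<and> y \<circ> \<xi> = id"
    have "y = y \<circ> (\<xi> \<circ> ?i)" using 1 by simp
    also have "\<dots> = (y \<circ> \<xi>) \<circ> ?i" by (simp add: comp_assoc)
    also have "\<dots> = ?i" using y by simp
    finally show "y = ?i" .
  qed
qed

lemma H_subgroup: "subgroup Hgrp (Aut_group J)"
proof (rule subgroup.intro)
  show "Hgrp \<subseteq> carrier (Aut_group J)" using H_Aut by (auto simp: Aut_group_def map_group_def)
  show "x \<otimes>\<^bsub>Aut_group J\<^esub> y \<in> Hgrp" if "x \<in> Hgrp" "y \<in> Hgrp" for x y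
    using H_comp that by (simp add: Aut_group_def map_group_def)
  show "\<one>\<^bsub>Aut_group J\<^esub> \<in> Hgrp" using H_id by (simp add: Aut_group_def map_group_def)
  show "inv\<^bsub>Aut_group J\<^esub> x \<in> Hgrp" if "x \<in> Hgrp" for x
    using m_inv_Aut[OF H_Aut[OF that]] H_invf[OF that] by simp
qed

end


context cliffB begin

definition matof :: "('v \<Rightarrow> 'v) \<Rightarrow> nat \<Rightarrow> nat \<Rightarrow> real" where
  "matof \<xi> = (\<lambda>i j. if i < p \<and> j < p then \<xi> (xb j) \<bullet> xb i else 0)"

lemma H_E: "\<xi> \<in> Hgrp \<Longrightarrow> x \<in> E \<Longrightarrow> \<xi> x \<in> E" using commJ_E H_comm by blast

lemma eq_on_E:
  assumes "linear f" "linear g" "\<And>j. j < p \<Longrightarrow> f (xb j) = g (xb j)" "x \<in> E"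
  shows "f x = g x"
  using linear_eq_on_span[OF assms(1,2), of "xb ` {..<p}" x] assms(3,4) xb_span by auto

lemma matof_orthm: assumes H: "\<xi> \<in> Hgrp" shows "orthm (matof \<xi>)"
proof -
  let ?f = "\<lambda>k. \<xi> (xb k)"
  have fE: "\<forall>k<p. ?f k \<in> E" using H_E[OF H] xb_E by auto
  have fon: "ON p ?f" using xb_on H_iso[OF H] unfolding ON_def by simp
  have fspan: "span (?f ` {..<p}) = E" using ON_span_eq[OF fon subspace_E fE dimE] .
  have "(\<Sum>k<p. matof \<xi> i k * matof \<xi> j k) = (if i = j then 1 else 0)" if ij: "i < p" "j < p" for i j
  proof -
    have "xb i \<bullet> xb j = (\<Sum>k<p. (xb i \<bullet> ?f k) * (xb j \<bullet> ?f k))"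
      using ON_parseval[OF fon] fspan xb_E ij by simp
    thus ?thesis using ij xb_on unfolding matof_def ON_def by (simp add: inner_commute)
  qed
  thus ?thesis unfolding orthm_iff matof_def by auto
qed

lemma phi_matof: assumes H: "\<xi> \<in> Hgrp" shows "phi (matof \<xi>) = \<xi>"
proof (rule uniq)
  have O: "orthm (matof \<xi>)" by (rule matof_orthm[OF H])
  show "linear (phi (matof \<xi>))" "commJ (phi (matof \<xi>))" using phi_props(1)[OF O] H_lin H_comm by auto
  show "linear \<xi>" "commJ \<xi>" using H H_lin H_comm by auto
  fix x assume x: "x \<in> E"
  show "phi (matof \<xi>) x = \<xi> x"
  proof (rule eq_on_E[OF _ _ _ x])
    show "linear (phi (matof \<xi>))" "linear \<xi>" using phi_props(1)[OF O] H_lin H by auto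
    fix j assume j: "j < p"
    have "phi (matof \<xi>) (xb j) = TQ (matof \<xi>) (xb j)" using phi_props(2)[OF O] xb_E j by auto
    also have "\<dots> = (\<Sum>i<p. (\<xi> (xb j) \<bullet> xb i) *\<^sub>R xb i)" using j by (simp add: TQ_xb matof_def)
    also have "\<dots> = \<xi> (xb j)" using E_expand[OF H_E[OF H xb_E[rule_format, OF j]]] by simp
    finally show "phi (matof \<xi>) (xb j) = \<xi> (xb j)" .
  qed
qed

lemma matof_phi: assumes Q: "orthm Q" shows "matof (phi Q) = Q"
proof (intro ext)
  fix i j
  have z: "\<not> (i < p \<and> j < p) \<Longrightarrow> Q i j = 0" using Q orthm_iff by blast
  show "matof (phi Q) i j = Q i j"
  proof (cases "i < p \<and> j < p")
    case True
    have "phi Q (xb j) = TQ Q (xb j)" using phi_props(2)[OF Q] xb_E True by auto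
    thus ?thesis using True by (simp add: matof_def TQ_xb ON_sum_inner[OF xb_on])
  qed (use z in \<open>auto simp: matof_def\<close>)
qed

lemma matof_comp:
  assumes H1: "\<xi> \<in> Hgrp" and H2: "\<eta> \<in> Hgrp"
  shows "matof (\<xi> \<circ> \<eta>) = mat_mult p (matof \<xi>) (matof \<eta>)"
proof (intro ext)
  fix i j
  show "matof (\<xi> \<circ> \<eta>) i j = mat_mult p (matof \<xi>) (matof \<eta>) i j"
  proof (cases "i < p \<and> j < p")
    case True
    have "\<eta> (xb j) = (\<Sum>l<p. (\<eta> (xb j) \<bullet> xb l) *\<^sub>R xb l)"
      using E_expand[OF H_E[OF H2 xb_E[rule_format]]] True by auto
    hence "\<xi> (\<eta> (xb j)) = \<xi> (\<Sum>l<p. (\<eta> (xb j) \<bullet> xb l) *\<^sub>R xb l)" by simp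
    also have "\<dots> = (\<Sum>l<p. (\<eta> (xb j) \<bullet> xb l) *\<^sub>R \<xi> (xb l))"
      by (simp add: linear_sum[OF H_lin[OF H1]] linear_scale[OF H_lin[OF H1]])
    finally have "\<xi> (\<eta> (xb j)) = (\<Sum>l<p. (\<eta> (xb j) \<bullet> xb l) *\<^sub>R \<xi> (xb l))" .
    hence "\<xi> (\<eta> (xb j)) \<bullet> xb i = (\<Sum>l<p. (\<xi> (xb l) \<bullet> xb i) * (\<eta> (xb j) \<bullet> xb l))"
      by (simp add: inner_sum_left mult.commute)
    thus ?thesis using True by (simp add: matof_def mat_mult_def)
  qed (auto simp: matof_def mat_mult_def)
qed

lemma phi_iso: "phi \<in> iso (orth_group p) (map_group Hgrp)"
proof -
  have car: "carrier (orth_group p) = {Q. orthm Q}" by (simp add: orthm_def)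
  have hom: "phi \<in> hom (orth_group p) (map_group Hgrp)"
    unfolding hom_def
  proof (intro CollectI conjI ballI)
    show "phi \<in> carrier (orth_group p) \<rightarrow> carrier (map_group Hgrp)"
      using phi_props(1) by (auto simp: car map_group_def)
    fix Q R assume Q: "Q \<in> carrier (orth_group p)" and R: "R \<in> carrier (orth_group p)"
    have Q': "orthm Q" and R': "orthm R" using Q R car by auto
    have HQR: "phi Q \<circ> phi R \<in> Hgrp" using H_comp phi_props(1) Q' R' by blast
    have "phi (mat_mult p Q R) = phi (matof (phi Q \<circ> phi R))"
      using matof_comp[OF phi_props(1)[OF Q'] phi_props(1)[OF R']] matof_phi[OF Q'] matof_phi[OF R'] by simp
    also have "\<dots> = phi Q \<circ> phi R" using phi_matof[OF HQR] .
    finally show "phi (Q \<otimes>\<^bsub>orth_group p\<^esub> R) = phi Q \<otimes>\<^bsub>map_group Hgrp\<^esub> phi R"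
      by (simp add: orth_group_def map_group_def)
  qed
  have "bij_betw phi (carrier (orth_group p)) (carrier (map_group Hgrp))"
  proof (rule bij_betw_byWitness[where f'=matof])
    show "\<forall>Q\<in>carrier (orth_group p). matof (phi Q) = Q" using matof_phi car by auto
    show "\<forall>\<xi>\<in>carrier (map_group Hgrp). phi (matof \<xi>) = \<xi>" using phi_matof by (simp add: map_group_def)
    show "phi ` carrier (orth_group p) \<subseteq> carrier (map_group Hgrp)" using phi_props(1) car by (auto simp: map_group_def)
    show "matof ` carrier (map_group Hgrp) \<subseteq> carrier (orth_group p)" using matof_orthm car by (auto simp: map_group_def)
  qed
  thus ?thesis unfolding iso_def using hom by blast
qed

end


context cliffB begin

lemma H_invE: assumes H: "\<xi> \<in> Hgrp" shows "\<xi> ` E = E"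
proof
  show "\<xi> ` E \<subseteq> E" using H_E[OF H] by auto
  show "E \<subseteq> \<xi> ` E"
  proof
    fix x assume x: "x \<in> E"
    have "\<xi> (inv_into UNIV \<xi> x) = x" using H_bij[OF H] by (simp add: bij_is_surj surj_f_inv_f)
    moreover have "inv_into UNIV \<xi> x \<in> E" using H_E[OF H_invf[OF H] x] .
    ultimately show "x \<in> \<xi> ` E" by (metis imageI)
  qed
qed

lemma H_LG: assumes H: "\<xi> \<in> Hgrp" and U: "U \<subseteq> E" shows "\<xi> ` LG U = LG (\<xi> ` U)"
proof
  have cp: "\<xi> (pr xs v) = pr xs (\<xi> v)" if "set xs \<subseteq> {..<m}" for xs v using commJ_pr[OF H_comm[OF H] that] .
  show "\<xi> ` LG U \<subseteq> LG (\<xi> ` U)"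
  proof
    fix y assume "y \<in> \<xi> ` LG U"
    then obtain g where g: "g \<in> LG U" "y = \<xi> g" by blast
    show "y \<in> LG (\<xi> ` U)" using g(1)[unfolded LG_def]
    proof (elim UnE CollectE exE conjE)
      fix xs u assume a: "g = pr xs u" "set xs \<subseteq> {..<m}" "even (length xs)" "u \<in> U"
      show "y \<in> LG (\<xi> ` U)" unfolding LG_def using a g(2) cp[OF a(2)]
        by (intro UnI1 CollectI exI[of _ xs] exI[of _ "\<xi> u"]) auto
    next
      fix xs w assume a: "g = pr xs w" "set xs \<subseteq> {..<m}" "odd (length xs)" "w \<in> E" "\<forall>u\<in>U. w \<bullet> u = 0"
      have "\<forall>u\<in>\<xi> ` U. \<xi> w \<bullet> u = 0" using a(5) H_iso[OF H] by auto
      thus "y \<in> LG (\<xi> ` U)" unfolding LG_def using a g(2) cp[OF a(2)] H_E[OF H a(4)]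
        by (intro UnI2 CollectI exI[of _ xs] exI[of _ "\<xi> w"]) auto
    qed
  qed
  show "LG (\<xi> ` U) \<subseteq> \<xi> ` LG U"
  proof
    fix y assume "y \<in> LG (\<xi> ` U)"
    thus "y \<in> \<xi> ` LG U" unfolding LG_def[of "\<xi> ` U"]
    proof (elim UnE CollectE exE conjE)
      fix xs u' assume a: "y = pr xs u'" "set xs \<subseteq> {..<m}" "even (length xs)" "u' \<in> \<xi> ` U"
      then obtain u where u: "u \<in> U" "u' = \<xi> u" by blast
      have "pr xs u \<in> LG U" unfolding LG_def using a u by blast
      thus "y \<in> \<xi> ` (LG U)" using a(1) u(2) cp[OF a(2)] by (metis imageI)
    next
      fix xs w' assume a: "y = pr xs w'" "set xs \<subseteq> {..<m}" "odd (length xs)" "w' \<in> E" "\<forall>u\<in>\<xi> ` U. w' \<bullet> u = 0"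
      obtain w where w: "w \<in> E" "w' = \<xi> w" using a(4) H_invE[OF H] by blast
      have "\<forall>u\<in>U. w \<bullet> u = 0" using a(5) w(2) H_iso[OF H] by auto
      hence "pr xs w \<in> LG U" unfolding LG_def using a w by blast
      thus "y \<in> \<xi> ` (LG U)" using a(1) w(2) cp[OF a(2)] by (metis imageI)
    qed
  qed
qed

lemma H_Lam: assumes H: "\<xi> \<in> Hgrp" and U: "U \<subseteq> E" shows "\<xi> ` Lam U = Lam (\<xi> ` U)"
  unfolding Lam_def using linear_span_image[OF H_lin[OF H]] H_LG[OF H U] by metis

lemma H_to:
  assumes y: "ON p y" "\<forall>j<p. y j \<in> E"
  shows "\<exists>\<xi>\<in>Hgrp. \<forall>j<p. \<xi> (xb j) = y j"
proof -
  define Q where "Q = (\<lambda>i j. if i < p \<and> j < p then y j \<bullet> xb i else 0)"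
  have yspan: "span (y ` {..<p}) = E" using ON_span_eq[OF y(1) subspace_E y(2) dimE] .
  have O: "orthm Q" unfolding orthm_iff
  proof (intro conjI allI impI)
    fix i j assume "\<not> (i < p \<and> j < p)" thus "Q i j = 0" by (auto simp: Q_def)
  next
    fix i j assume ij: "i < p" "j < p"
    have "xb i \<bullet> xb j = (\<Sum>k<p. (xb i \<bullet> y k) * (xb j \<bullet> y k))"
      using ON_parseval[OF y(1)] yspan xb_E ij by simp
    thus "(\<Sum>k<p. Q i k * Q j k) = (if i = j then 1 else 0)"
      using ij xb_on unfolding Q_def ON_def by (simp add: inner_commute)
  qed
  have "phi Q (xb j) = y j" if j: "j < p" for j
  proof -
    have "phi Q (xb j) = TQ Q (xb j)" using phi_props(2)[OF O] xb_E j by auto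
    also have "\<dots> = (\<Sum>i<p. (y j \<bullet> xb i) *\<^sub>R xb i)" using j by (simp add: TQ_xb Q_def)
    also have "\<dots> = y j" using E_expand y(2) j by simp
    finally show ?thesis .
  qed
  thus ?thesis using phi_props(1)[OF O] by blast
qed

definition Ur :: "nat \<Rightarrow> 'v set" where "Ur r = span (xb ` {..<r})"

lemma ON_mono: "ON p f \<Longrightarrow> r \<le> p \<Longrightarrow> ON r f" unfolding ON_def by auto

lemma Ur_props:
  assumes r: "r \<le> p"
  shows "subspace (Ur r)" "Ur r \<subseteq> E" "dim (Ur r) = r"
proof -
  show "subspace (Ur r)" unfolding Ur_def by simp
  show "Ur r \<subseteq> E" unfolding Ur_def using xb_E r subspace_E by (intro span_minimal) auto
  show "dim (Ur r) = r" unfolding Ur_def using ON_dim[OF ON_mono[OF xb_on r]] .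
qed

lemma transitive:
  assumes U: "subspace U" "U \<subseteq> E" and r: "dim U = r"
  shows "\<exists>\<xi>\<in>Hgrp. \<xi> ` Ur r = U"
proof -
  obtain BU where BU: "BU \<subseteq> U" "pairwise orthogonal BU" "\<And>x. x \<in> BU \<Longrightarrow> norm x = 1"
    "independent BU" "card BU = dim U" "span BU = U" using orthonormal_basis_subspace[OF U(1)] by metis
  define W where "W = {y \<in> E. \<forall>x\<in>U. orthogonal x y}"
  have sW: "subspace W" unfolding W_def using subspace_E
    by (auto simp: subspace_def orthogonal_def inner_add_right)
  have dW: "dim W + dim U = p" unfolding W_def using dim_subspace_orthogonal_to_vectors[OF U(1) subspace_E U(2)] dimE by simp
  obtain BW where BW: "BW \<subseteq> W" "pairwise orthogonal BW" "\<And>x. x \<in> BW \<Longrightarrow> norm x = 1"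
    "independent BW" "card BW = dim W" "span BW = W" using orthonormal_basis_subspace[OF sW] by metis
  have fU: "finite BU" "finite BW" using BU(4) BW(4) independent_imp_finite by auto
  obtain fu where fu: "bij_betw fu {0..<r} BU" using ex_bij_betw_nat_finite[OF fU(1)] BU(5) r by auto
  obtain fw where fw: "bij_betw fw {0..<p - r} BW" using ex_bij_betw_nat_finite[OF fU(2)] BW(5) dW r
    by (metis add_diff_cancel_right')
  have rp: "r \<le> p" using dW r by simp
  define y where "y j = (if j < r then fu j else fw (j - r))" for j
  have yU: "y j \<in> U" if "j < r" for j using fu that BU(1) unfolding y_def bij_betw_def by auto
  have yW: "y j \<in> W" if "r \<le> j" "j < p" for j using fw that BW(1) unfolding y_def bij_betw_def by auto
  have yE: "\<forall>j<p. y j \<in> E" using yU yW U(2) W_def by (metis (no_types, lifting) mem_Collect_eq not_le subsetD)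
  have ON_pair: "f i \<bullet> f j = (if i = j then 1 else 0)"
    if "bij_betw f {0..<n} B" "pairwise orthogonal B" "\<And>x. x \<in> B \<Longrightarrow> norm x = 1" "i < n" "j < n" for f :: "nat \<Rightarrow> 'v" and n :: nat and B i j
  proof (cases "i = j")
    case True
    have "i \<in> {0..<n}" using that(4) by simp
    hence "f i \<in> B" using bij_betw_apply[OF that(1)] by blast
    hence "norm (f i) = 1" using that(3) by blast
    thus ?thesis using True by (simp add: norm_eq_1)
  next
    case False
    have "f i \<noteq> f j" using that False unfolding bij_betw_def inj_on_def by auto
    moreover have "f i \<in> B" "f j \<in> B" using that bij_betw_apply by fastforce+
    ultimately show ?thesis using that(2) False unfolding pairwise_def orthogonal_def by auto
  qed
  have yon: "ON p y" unfolding ON_def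
  proof (intro allI impI)
    fix i j assume ij: "i < p" "j < p"
    show "y i \<bullet> y j = (if i = j then 1 else 0)"
    proof (cases "i < r"; cases "j < r")
      assume "i < r" "j < r" thus ?thesis using ON_pair[OF fu BU(2,3)] by (simp add: y_def)
    next
      assume a: "\<not> i < r" "\<not> j < r"
      hence "y i \<bullet> y j = fw (i - r) \<bullet> fw (j - r)" by (simp add: y_def)
      also have "\<dots> = (if i - r = j - r then 1 else 0)" using ON_pair[OF fw BW(2,3)] a ij by simp
      finally show ?thesis using a by auto
    next
      assume a: "i < r" "\<not> j < r"
      have "y j \<in> W" using yW a ij by simp
      thus ?thesis using yU[OF a(1)] a unfolding W_def orthogonal_def by auto
    next
      assume a: "\<not> i < r" "j < r"
      have "y i \<in> W" using yW a ij by simp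
      thus ?thesis using yU[OF a(2)] a unfolding W_def orthogonal_def by (auto simp: inner_commute)
    qed
  qed
  obtain \<xi> where \<xi>: "\<xi> \<in> Hgrp" "\<forall>j<p. \<xi> (xb j) = y j" using H_to[OF yon yE] by blast
  have "\<xi> ` Ur r = span (\<xi> ` xb ` {..<r})" unfolding Ur_def using linear_span_image[OF H_lin[OF \<xi>(1)]] by metis
  also have "\<xi> ` xb ` {..<r} = fu ` {0..<r}" using \<xi>(2) rp by (force simp: y_def image_iff)
  also have "\<dots> = BU" using fu by (simp add: bij_betw_def)
  finally show ?thesis using BU(6) \<xi>(1) by blast
qed

end


context cliffB begin

definition Orb :: "nat \<Rightarrow> 'v set set" where
  "Orb r = {Lam U | U. subspace U \<and> U \<subseteq> E \<and> dim U = r}"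

lemma Lam_inj:
  assumes "subspace U" "U \<subseteq> E" "subspace U'" "U' \<subseteq> E" "Lam U = Lam U'"
  shows "U = U'"
  using Lam_E assms by metis

lemma H_dim: assumes H: "h \<in> Hgrp" shows "dim (h ` U) = dim U"
  using dim_image_eq[OF H_lin[OF H]] H_inj[OF H] by (metis inj_on_subset subset_UNIV)

lemma H_sub: assumes H: "h \<in> Hgrp" "subspace U" "U \<subseteq> E" shows "subspace (h ` U)" "h ` U \<subseteq> E"
  using linear_subspace_image[OF H_lin[OF H(1)] H(2)] H_E[OF H(1)] H(3) by auto

lemma Orb_H:
  assumes r: "r \<le> p"
  shows "Orb r = {h ` Lam (Ur r) | h. h \<in> Hgrp}"
proof
  show "Orb r \<subseteq> {h ` Lam (Ur r) | h. h \<in> Hgrp}"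
  proof
    fix L assume "L \<in> Orb r"
    then obtain U where U: "L = Lam U" "subspace U" "U \<subseteq> E" "dim U = r" unfolding Orb_def by blast
    obtain h where h: "h \<in> Hgrp" "h ` Ur r = U" using transitive[OF U(2,3,4)] by blast
    have "h ` Lam (Ur r) = Lam U" using H_Lam[OF h(1) Ur_props(2)[OF r]] h(2) by simp
    thus "L \<in> {h ` Lam (Ur r) | h. h \<in> Hgrp}" using U(1) h(1) by blast
  qed
  show "{h ` Lam (Ur r) | h. h \<in> Hgrp} \<subseteq> Orb r"
  proof
    fix L assume "L \<in> {h ` Lam (Ur r) | h. h \<in> Hgrp}"
    then obtain h where h: "h \<in> Hgrp" "L = h ` Lam (Ur r)" by blast
    have "L = Lam (h ` Ur r)" using H_Lam[OF h(1) Ur_props(2)[OF r]] h(2) by simp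
    moreover have "dim (h ` Ur r) = r" using H_dim[OF h(1)] Ur_props(3)[OF r] by simp
    ultimately show "L \<in> Orb r" unfolding Orb_def using H_sub[OF h(1) Ur_props(1,2)[OF r]] by blast
  qed
qed

lemma Aut_orbit:
  assumes L: "L \<in> Lag J"
  shows "{\<xi> ` L | \<xi>. \<xi> \<in> Aut_o J} = Orb (dim (L \<inter> E))"
proof
  let ?r = "dim (L \<inter> E)"
  have sLE: "subspace (L \<inter> E)" using L subspace_E unfolding Lag_iff by (blast intro: subspace_inter)
  show "{\<xi> ` L | \<xi>. \<xi> \<in> Aut_o J} \<subseteq> Orb ?r"
  proof
    fix L' assume "L' \<in> {\<xi> ` L | \<xi>. \<xi> \<in> Aut_o J}"
    then obtain \<xi> where \<xi>: "\<xi> \<in> Aut_o J" "L' = \<xi> ` L" by blast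
    have L'Lag: "L' \<in> Lag J" using Aut_Lag[OF \<xi>(1) L] \<xi>(2) by simp
    have "L' = Lam (L' \<inter> E)" using Lag_struct[OF L'Lag] .
    moreover have "dim (L' \<inter> E) = ?r" using Aut_dimLE[OF \<xi>(1)] \<xi>(2) by simp
    moreover have "subspace (L' \<inter> E)" using L'Lag subspace_E unfolding Lag_iff by (blast intro: subspace_inter)
    ultimately show "L' \<in> Orb ?r" unfolding Orb_def by blast
  qed
  show "Orb ?r \<subseteq> {\<xi> ` L | \<xi>. \<xi> \<in> Aut_o J}"
  proof
    fix L' assume "L' \<in> Orb ?r"
    then obtain U where U: "L' = Lam U" "subspace U" "U \<subseteq> E" "dim U = ?r" unfolding Orb_def by blast
    obtain h1 where h1: "h1 \<in> Hgrp" "h1 ` Ur ?r = L \<inter> E" using transitive[OF sLE _ refl] by blast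
    obtain h2 where h2: "h2 \<in> Hgrp" "h2 ` Ur ?r = U" using transitive[OF U(2,3,4)] by blast
    let ?i = "inv_into UNIV h1"
    have iH: "?i \<in> Hgrp" using H_invf[OF h1(1)] .
    have "?i ` (L \<inter> E) = Ur ?r" using h1 H_bij[OF h1(1)] by (metis bij_is_inj image_inv_f_f)
    hence "(h2 \<circ> ?i) ` (L \<inter> E) = U" using h2(2) image_comp[of h2 ?i "L \<inter> E"] by simp
    moreover have cH: "h2 \<circ> ?i \<in> Hgrp" using H_comp[OF h2(1) iH] .
    moreover have "L = Lam (L \<inter> E)" using Lag_struct[OF L] .
    ultimately have "(h2 \<circ> ?i) ` L = Lam U" using H_Lam[OF cH] by (metis inf_le2)
    thus "L' \<in> {\<xi> ` L | \<xi>. \<xi> \<in> Aut_o J}" using U(1) H_Aut[OF cH] by blast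
  qed
qed

lemma LE_le_p: "L \<in> Lag J \<Longrightarrow> dim (L \<inter> E) \<le> p"
  using dim_subset[of "L \<inter> E" E] dimE by auto

lemma L0_props:
  assumes r: "r \<le> p"
  shows "Lam (Ur r) \<in> Lag J" "Lam (Ur r) \<in> Orb r" "dim (Lam (Ur r) \<inter> E) = r"
proof -
  show "Lam (Ur r) \<in> Lag J" using Lam_Lag Ur_props[OF r] by blast
  show "Lam (Ur r) \<in> Orb r" unfolding Orb_def using Ur_props[OF r] by blast
  show "dim (Lam (Ur r) \<inter> E) = r" using Lam_E Ur_props[OF r] by simp
qed

lemma orbits_eq: "Lag_orbits J = Orb ` {0..p}"
proof
  show "Lag_orbits J \<subseteq> Orb ` {0..p}"
  proof
    fix Ob assume "Ob \<in> Lag_orbits J"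
    then obtain L where L: "L \<in> Lag J" "Ob = {\<xi> ` L | \<xi>. \<xi> \<in> Aut_o J}" unfolding Lag_orbits_def by blast
    thus "Ob \<in> Orb ` {0..p}" using Aut_orbit[OF L(1)] LE_le_p[OF L(1)] by auto
  qed
  show "Orb ` {0..p} \<subseteq> Lag_orbits J"
  proof
    fix Ob assume "Ob \<in> Orb ` {0..p}"
    then obtain r where r: "r \<le> p" "Ob = Orb r" by auto
    have "Ob = {\<xi> ` Lam (Ur r) | \<xi>. \<xi> \<in> Aut_o J}" using Aut_orbit[OF L0_props(1)[OF r(1)]] L0_props(3)[OF r(1)] r(2) by simp
    thus "Ob \<in> Lag_orbits J" unfolding Lag_orbits_def using L0_props(1)[OF r(1)] by blast
  qed
qed

lemma Orb_inj: "inj_on Orb {0..p}"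
proof (rule inj_onI)
  fix r r' assume r: "r \<in> {0..p}" "r' \<in> {0..p}" and eq: "Orb r = Orb r'"
  have "Lam (Ur r) \<in> Orb r'" using L0_props(2)[of r] r eq by auto
  then obtain U where U: "Lam (Ur r) = Lam U" "subspace U" "U \<subseteq> E" "dim U = r'" unfolding Orb_def by blast
  have "Ur r = U" using Lam_inj[OF Ur_props(1,2) U(2,3) U(1)] r by auto
  thus "r = r'" using Ur_props(3) r U(4) by auto
qed

end


lemma sum_split: fixes r d :: nat and f :: "nat \<Rightarrow> real"
  shows "(\<Sum>k<r + d. f k) = (\<Sum>k<r. f k) + (\<Sum>k<d. f (k + r))"
  by (induction d) (auto simp: add.commute add.left_commute)

lemma sum_split': fixes r p :: nat and f :: "nat \<Rightarrow> real"
  shows "r \<le> p \<Longrightarrow> (\<Sum>k<p. f k) = (\<Sum>k<r. f k) + (\<Sum>k<p - r. f (k + r))"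
  using sum_split[where r=r and d="p - r" and f=f] by simp

context cliffB begin

definition bd :: "nat \<Rightarrow> (nat \<Rightarrow> nat \<Rightarrow> real) \<Rightarrow> bool" where
  "bd r Q \<longleftrightarrow> (\<forall>i<p. \<forall>j<p. (i < r) \<noteq> (j < r) \<longrightarrow> Q i j = 0)"

lemma perp_Ur: assumes "r \<le> i" "i < p" "u \<in> Ur r" shows "xb i \<bullet> u = 0"
proof -
  have "Ur r \<subseteq> {u. xb i \<bullet> u = 0}" unfolding Ur_def
    using xb_on assms(1,2) unfolding ON_def
    by (intro span_minimal) (auto simp: subspace_def inner_add_right)
  thus ?thesis using assms(3) by blast
qed

lemma stab_iff_U:
  assumes r: "r \<le> p" and h: "h \<in> Hgrp"
  shows "h ` Lam (Ur r) = Lam (Ur r) \<longleftrightarrow> h ` Ur r = Ur r"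
proof -
  have "h ` Lam (Ur r) = Lam (h ` Ur r)" using H_Lam[OF h Ur_props(2)[OF r]] .
  thus ?thesis using Lam_inj[OF H_sub[OF h Ur_props(1,2)[OF r]] Ur_props(1,2)[OF r]] by metis
qed

lemma stab_iff_bd:
  assumes r: "r \<le> p" and h: "h \<in> Hgrp"
  shows "h ` Ur r = Ur r \<longleftrightarrow> bd r (matof h)"
proof
  assume eq: "h ` Ur r = Ur r"
  show "bd r (matof h)" unfolding bd_def
  proof (intro allI impI)
    fix i j assume ij: "i < p" "j < p" "(i < r) \<noteq> (j < r)"
    show "matof h i j = 0"
    proof (cases "j < r")
      case True
      hence ir: "r \<le> i" using ij by auto
      have "xb j \<in> Ur r" unfolding Ur_def using True by (intro span_base) auto
      hence "h (xb j) \<in> Ur r" using eq by blast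
      hence "xb i \<bullet> h (xb j) = 0" using perp_Ur[OF ir ij(1)] by blast
      thus ?thesis using ij by (simp add: matof_def inner_commute)
    next
      case False
      hence ir: "i < r" "r \<le> j" using ij by auto
      have "xb i \<in> Ur r" unfolding Ur_def using ir by (intro span_base) auto
      then obtain u where u: "u \<in> Ur r" "xb i = h u" using eq by blast
      have "h (xb j) \<bullet> xb i = xb j \<bullet> u" using u(2) H_iso[OF h] by simp
      also have "\<dots> = 0" using perp_Ur[OF ir(2) ij(2) u(1)] .
      finally show ?thesis using ij by (simp add: matof_def)
    qed
  qed
next
  assume b: "bd r (matof h)"
  have "h (xb j) \<in> Ur r" if j: "j < r" for j
  proof -
    have jp: "j < p" using j r by simp
    have "h (xb j) = (\<Sum>i<p. (h (xb j) \<bullet> xb i) *\<^sub>R xb i)"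
      using E_expand[OF H_E[OF h]] xb_E jp by blast
    also have "\<dots> \<in> Ur r" unfolding Ur_def
    proof (rule span_sum)
      fix i assume i: "i \<in> {..<p}"
      show "(h (xb j) \<bullet> xb i) *\<^sub>R xb i \<in> span (xb ` {..<r})"
      proof (cases "i < r")
        case True thus ?thesis by (intro span_scale span_base) auto
      next
        case False
        hence "matof h i j = 0" using b i j jp unfolding bd_def by auto
        hence "h (xb j) \<bullet> xb i = 0" using i jp by (simp add: matof_def)
        thus ?thesis by (simp add: span_zero)
      qed
    qed
    finally show ?thesis .
  qed
  hence "h ` xb ` {..<r} \<subseteq> Ur r" by auto
  hence "span (h ` xb ` {..<r}) \<subseteq> Ur r" using Ur_props(1)[OF r] by (simp add: span_minimal)
  hence sub: "h ` Ur r \<subseteq> Ur r" unfolding Ur_def using linear_span_image[OF H_lin[OF h]] by metis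
  show "h ` Ur r = Ur r"
    using subspace_dim_equal[OF H_sub(1)[OF h Ur_props(1,2)[OF r]] Ur_props(1)[OF r] sub]
      H_dim[OF h] by simp
qed

end


lemma orth_carrier_iff: "A \<in> carrier (orth_group n) \<longleftrightarrow> (\<forall>i j. \<not> (i < n \<and> j < n) \<longrightarrow> A i j = 0) \<and>
    (\<forall>i<n. \<forall>j<n. (\<Sum>k<n. A i k * A j k) = (if i = j then 1 else 0))"
proof -
  have "mat_mult n A (\<lambda>i j. A j i) = mat_one n \<longleftrightarrow> (\<forall>i<n. \<forall>j<n. (\<Sum>k<n. A i k * A j k) = (if i = j then 1 else 0))"
    unfolding mat_mult_def mat_one_def by (auto simp: fun_eq_iff)
  thus ?thesis unfolding orth_group_def by auto
qed

context cliffB begin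

lemma orthm_iff2: "orthm Q \<longleftrightarrow> Q \<in> carrier (orth_group p)" by (simp add: orthm_def)

definition blkA :: "nat \<Rightarrow> (nat \<Rightarrow> nat \<Rightarrow> real) \<Rightarrow> nat \<Rightarrow> nat \<Rightarrow> real" where
  "blkA r Q = (\<lambda>i j. if i < r \<and> j < r then Q i j else 0)"
definition blkB :: "nat \<Rightarrow> (nat \<Rightarrow> nat \<Rightarrow> real) \<Rightarrow> nat \<Rightarrow> nat \<Rightarrow> real" where
  "blkB r Q = (\<lambda>i j. if i < p - r \<and> j < p - r then Q (i + r) (j + r) else 0)"
definition bdiag :: "nat \<Rightarrow> (nat \<Rightarrow> nat \<Rightarrow> real) \<Rightarrow> (nat \<Rightarrow> nat \<Rightarrow> real) \<Rightarrow> nat \<Rightarrow> nat \<Rightarrow> real" where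
  "bdiag r A B = (\<lambda>i j. if i < r \<and> j < r then A i j
      else if r \<le> i \<and> i < p \<and> r \<le> j \<and> j < p then B (i - r) (j - r) else 0)"

lemma bd_zero: "bd r Q \<Longrightarrow> i < p \<Longrightarrow> j < p \<Longrightarrow> (i < r) \<noteq> (j < r) \<Longrightarrow> Q i j = 0"
  unfolding bd_def by blast

lemma blk_carrier:
  assumes r: "r \<le> p" and Q: "orthm Q" and b: "bd r Q"
  shows "blkA r Q \<in> carrier (orth_group r)" "blkB r Q \<in> carrier (orth_group (p - r))"
proof -
  have Qo: "\<forall>i<p. \<forall>j<p. (\<Sum>k<p. Q i k * Q j k) = (if i = j then 1 else 0)" using Q orthm_iff by blast
  show "blkA r Q \<in> carrier (orth_group r)" unfolding orth_carrier_iff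
  proof (intro conjI allI impI)
    fix i j assume "\<not> (i < r \<and> j < r)" thus "blkA r Q i j = 0" by (auto simp: blkA_def)
  next
    fix i j assume ij: "i < r" "j < r"
    have "(\<Sum>k<p. Q i k * Q j k) = (\<Sum>k<r. Q i k * Q j k) + (\<Sum>k<p - r. Q i (k + r) * Q j (k + r))"
      by (rule sum_split'[OF r])
    also have "(\<Sum>k<p - r. Q i (k + r) * Q j (k + r)) = 0"
      using bd_zero[OF b] ij r by (intro sum.neutral) auto
    finally show "(\<Sum>k<r. blkA r Q i k * blkA r Q j k) = (if i = j then 1 else 0)"
      using Qo ij r by (simp add: blkA_def)
  qed
  show "blkB r Q \<in> carrier (orth_group (p - r))" unfolding orth_carrier_iff
  proof (intro conjI allI impI)
    fix i j assume "\<not> (i < p - r \<and> j < p - r)" thus "blkB r Q i j = 0" by (auto simp: blkB_def)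
  next
    fix i j assume ij: "i < p - r" "j < p - r"
    have "(\<Sum>k<p. Q (i + r) k * Q (j + r) k) = (\<Sum>k<r. Q (i + r) k * Q (j + r) k) + (\<Sum>k<p - r. Q (i + r) (k + r) * Q (j + r) (k + r))"
      by (rule sum_split'[OF r])
    also have "(\<Sum>k<r. Q (i + r) k * Q (j + r) k) = 0"
      using bd_zero[OF b] ij r by (intro sum.neutral) auto
    finally show "(\<Sum>k<p - r. blkB r Q i k * blkB r Q j k) = (if i = j then 1 else 0)"
      using Qo ij r by (simp add: blkB_def)
  qed
qed

lemma blk_mult:
  assumes r: "r \<le> p" and b1: "bd r M1" and b2: "bd r M2"
  shows "blkA r (mat_mult p M1 M2) = mat_mult r (blkA r M1) (blkA r M2)"
    "blkB r (mat_mult p M1 M2) = mat_mult (p - r) (blkB r M1) (blkB r M2)"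
proof -
  show "blkA r (mat_mult p M1 M2) = mat_mult r (blkA r M1) (blkA r M2)"
  proof (intro ext)
    fix i j
    show "blkA r (mat_mult p M1 M2) i j = mat_mult r (blkA r M1) (blkA r M2) i j"
    proof (cases "i < r \<and> j < r")
      case True
      have "(\<Sum>k<p. M1 i k * M2 k j) = (\<Sum>k<r. M1 i k * M2 k j) + (\<Sum>k<p - r. M1 i (k + r) * M2 (k + r) j)"
        by (rule sum_split'[OF r])
      also have "(\<Sum>k<p - r. M1 i (k + r) * M2 (k + r) j) = 0"
        using bd_zero[OF b1] True r by (intro sum.neutral) auto
      finally show ?thesis using True r by (simp add: blkA_def mat_mult_def)
    qed (auto simp: blkA_def mat_mult_def)
  qed
  show "blkB r (mat_mult p M1 M2) = mat_mult (p - r) (blkB r M1) (blkB r M2)"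
  proof (intro ext)
    fix i j
    show "blkB r (mat_mult p M1 M2) i j = mat_mult (p - r) (blkB r M1) (blkB r M2) i j"
    proof (cases "i < p - r \<and> j < p - r")
      case True
      have "(\<Sum>k<p. M1 (i + r) k * M2 k (j + r)) = (\<Sum>k<r. M1 (i + r) k * M2 k (j + r)) + (\<Sum>k<p - r. M1 (i + r) (k + r) * M2 (k + r) (j + r))"
        by (rule sum_split'[OF r])
      also have "(\<Sum>k<r. M1 (i + r) k * M2 k (j + r)) = 0"
        using bd_zero[OF b1] True r by (intro sum.neutral) auto
      finally show ?thesis using True r by (auto simp: blkB_def mat_mult_def less_diff_conv)
    qed (auto simp: blkB_def mat_mult_def)
  qed
qed

lemma bdiag_blk:
  assumes r: "r \<le> p" and Q: "orthm Q" and b: "bd r Q"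
  shows "bdiag r (blkA r Q) (blkB r Q) = Q"
proof (intro ext)
  fix i j
  have z: "\<not> (i < p \<and> j < p) \<Longrightarrow> Q i j = 0" using Q orthm_iff by blast
  show "bdiag r (blkA r Q) (blkB r Q) i j = Q i j"
  proof (cases "i < r \<and> j < r")
    case True thus ?thesis by (simp add: bdiag_def blkA_def)
  next
    case F1: False
    show ?thesis
    proof (cases "r \<le> i \<and> i < p \<and> r \<le> j \<and> j < p")
      case True
      hence "i - r < p - r" "j - r < p - r" "i - r + r = i" "j - r + r = j" by auto
      thus ?thesis using F1 True by (simp add: bdiag_def blkB_def)
    next
      case F2: False
      have "Q i j = 0"
      proof (cases "i < p \<and> j < p")
        case True
        hence "(i < r) \<noteq> (j < r)" using F1 F2 by auto
        thus ?thesis using bd_zero[OF b] True by blast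
      qed (use z in auto)
      moreover have "bdiag r (blkA r Q) (blkB r Q) i j = 0" using F1 F2 unfolding bdiag_def by auto
      ultimately show ?thesis by simp
    qed
  qed
qed

lemma bdiag_props:
  assumes r: "r \<le> p" and A: "A \<in> carrier (orth_group r)" and B: "B \<in> carrier (orth_group (p - r))"
  shows "orthm (bdiag r A B)" "bd r (bdiag r A B)" "blkA r (bdiag r A B) = A" "blkB r (bdiag r A B) = B"
proof -
  have Az: "\<And>i j. \<not> (i < r \<and> j < r) \<Longrightarrow> A i j = 0" and Ao: "\<forall>i<r. \<forall>j<r. (\<Sum>k<r. A i k * A j k) = (if i = j then 1 else 0)"
    using A unfolding orth_carrier_iff by auto
  have Bz: "\<And>i j. \<not> (i < p - r \<and> j < p - r) \<Longrightarrow> B i j = 0" and Bo: "\<forall>i<p - r. \<forall>j<p - r. (\<Sum>k<p - r. B i k * B j k) = (if i = j then 1 else 0)"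
    using B unfolding orth_carrier_iff by auto
  let ?Q = "bdiag r A B"
  show "bd r ?Q" unfolding bd_def bdiag_def by auto
  show "blkA r ?Q = A" using Az by (auto simp: fun_eq_iff blkA_def bdiag_def)
  show "blkB r ?Q = B" using Bz by (auto simp: fun_eq_iff blkB_def bdiag_def)
  show "orthm ?Q" unfolding orthm_iff
  proof (intro conjI allI impI)
    fix i j assume "\<not> (i < p \<and> j < p)" thus "?Q i j = 0" using r by (auto simp: bdiag_def)
  next
    fix i j assume ij: "i < p" "j < p"
    have split: "(\<Sum>k<p. ?Q i k * ?Q j k) = (\<Sum>k<r. ?Q i k * ?Q j k) + (\<Sum>k<p - r. ?Q i (k + r) * ?Q j (k + r))"
      by (rule sum_split'[OF r])
    show "(\<Sum>k<p. ?Q i k * ?Q j k) = (if i = j then 1 else 0)"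
    proof (cases "i < r"; cases "j < r")
      assume a: "i < r" "j < r"
      have "(\<Sum>k<r. ?Q i k * ?Q j k) = (\<Sum>k<r. A i k * A j k)" using a by (intro sum.cong) (auto simp: bdiag_def)
      moreover have "(\<Sum>k<p - r. ?Q i (k + r) * ?Q j (k + r)) = 0" using a by (intro sum.neutral) (auto simp: bdiag_def)
      ultimately show ?thesis using split Ao a by simp
    next
      assume a: "\<not> i < r" "\<not> j < r"
      have "(\<Sum>k<r. ?Q i k * ?Q j k) = 0" using a by (intro sum.neutral) (auto simp: bdiag_def)
      moreover have "(\<Sum>k<p - r. ?Q i (k + r) * ?Q j (k + r)) = (\<Sum>k<p - r. B (i - r) k * B (j - r) k)"
        using a ij by (intro sum.cong) (auto simp: bdiag_def)
      moreover have "i - r < p - r" "j - r < p - r" using a ij by auto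
      ultimately show ?thesis using split Bo a by auto
    next
      assume a: "i < r" "\<not> j < r"
      have "(\<Sum>k<r. ?Q i k * ?Q j k) = 0" using a by (intro sum.neutral) (auto simp: bdiag_def)
      moreover have "(\<Sum>k<p - r. ?Q i (k + r) * ?Q j (k + r)) = 0" using a by (intro sum.neutral) (auto simp: bdiag_def)
      ultimately show ?thesis using split a by auto
    next
      assume a: "\<not> i < r" "j < r"
      have "(\<Sum>k<r. ?Q i k * ?Q j k) = 0" using a by (intro sum.neutral) (auto simp: bdiag_def)
      moreover have "(\<Sum>k<p - r. ?Q i (k + r) * ?Q j (k + r)) = 0" using a by (intro sum.neutral) (auto simp: bdiag_def)
      ultimately show ?thesis using split a by auto
    qed
  qed
qed

definition Stab :: "nat \<Rightarrow> ('v \<Rightarrow> 'v) set" where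
  "Stab r = {h \<in> Hgrp. h ` Lam (Ur r) = Lam (Ur r)}"

lemma Stab_bd: assumes "r \<le> p" "h \<in> Hgrp" shows "h \<in> Stab r \<longleftrightarrow> bd r (matof h)"
proof -
  have "h \<in> Stab r \<longleftrightarrow> h ` Lam (Ur r) = Lam (Ur r)" unfolding Stab_def using assms(2) by simp
  also have "\<dots> \<longleftrightarrow> h ` Ur r = Ur r" by (rule stab_iff_U[OF assms])
  also have "\<dots> \<longleftrightarrow> bd r (matof h)" by (rule stab_iff_bd[OF assms])
  finally show ?thesis .
qed

definition psi :: "nat \<Rightarrow> ('v \<Rightarrow> 'v) \<Rightarrow> (nat \<Rightarrow> nat \<Rightarrow> real) \<times> (nat \<Rightarrow> nat \<Rightarrow> real)" where
  "psi r h = (blkA r (matof h), blkB r (matof h))"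

lemma stab_iso:
  assumes r: "r \<le> p"
  shows "map_group (Stab r) \<cong> DirProd (orth_group r) (orth_group (p - r))"
proof -
  let ?D = "DirProd (orth_group r) (orth_group (p - r))"
  have SH: "h \<in> Hgrp" if "h \<in> Stab r" for h using that unfolding Stab_def by auto
  have Sb: "bd r (matof h)" if "h \<in> Stab r" for h using Stab_bd[OF r SH[OF that]] that by blast
  have carS: "carrier (map_group (Stab r)) = Stab r" by (simp add: map_group_def)
  have carD: "carrier ?D = carrier (orth_group r) \<times> carrier (orth_group (p - r))" by (simp add: DirProd_def)
  have psiC: "psi r h \<in> carrier ?D" if h: "h \<in> Stab r" for h
  proof -
    have "blkA r (matof h) \<in> carrier (orth_group r)" "blkB r (matof h) \<in> carrier (orth_group (p - r))"
      using blk_carrier[OF r matof_orthm[OF SH[OF h]] Sb[OF h]] by auto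
    thus ?thesis unfolding carD psi_def by simp
  qed
  have hom: "psi r \<in> hom (map_group (Stab r)) ?D"
    unfolding hom_def
  proof (intro CollectI conjI ballI)
    show "psi r \<in> carrier (map_group (Stab r)) \<rightarrow> carrier ?D" unfolding carS using psiC by blast
    fix h1 h2 assume h: "h1 \<in> carrier (map_group (Stab r))" "h2 \<in> carrier (map_group (Stab r))"
    have h': "h1 \<in> Stab r" "h2 \<in> Stab r" using h carS by auto
    have mc: "matof (h1 \<circ> h2) = mat_mult p (matof h1) (matof h2)" using matof_comp SH h' by blast
    have m1: "h1 \<otimes>\<^bsub>map_group (Stab r)\<^esub> h2 = h1 \<circ> h2" by (simp add: map_group_def)
    have m2: "psi r h1 \<otimes>\<^bsub>?D\<^esub> psi r h2 = (mat_mult r (blkA r (matof h1)) (blkA r (matof h2)),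
         mat_mult (p - r) (blkB r (matof h1)) (blkB r (matof h2)))"
      by (simp add: DirProd_def orth_group_def psi_def)
    show "psi r (h1 \<otimes>\<^bsub>map_group (Stab r)\<^esub> h2) = psi r h1 \<otimes>\<^bsub>?D\<^esub> psi r h2"
      unfolding m1 m2 using blk_mult[OF r Sb[OF h'(1)] Sb[OF h'(2)]] by (simp add: psi_def mc)
  qed
  have "bij_betw (psi r) (carrier (map_group (Stab r))) (carrier ?D)"
    unfolding carS
  proof (rule bij_betw_byWitness[where f'="\<lambda>AB. phi (bdiag r (fst AB) (snd AB))"])
    show "\<forall>h\<in>Stab r. phi (bdiag r (fst (psi r h)) (snd (psi r h))) = h"
    proof
      fix h assume h: "h \<in> Stab r"
      have "bdiag r (blkA r (matof h)) (blkB r (matof h)) = matof h"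
        using bdiag_blk[OF r matof_orthm[OF SH[OF h]] Sb[OF h]] .
      thus "phi (bdiag r (fst (psi r h)) (snd (psi r h))) = h" using phi_matof[OF SH[OF h]] by (simp add: psi_def)
    qed
    show "\<forall>AB\<in>carrier ?D. psi r (phi (bdiag r (fst AB) (snd AB))) = AB"
    proof
      fix AB assume "AB \<in> carrier ?D"
      hence AB: "fst AB \<in> carrier (orth_group r)" "snd AB \<in> carrier (orth_group (p - r))" unfolding carD by auto
      have O: "orthm (bdiag r (fst AB) (snd AB))" using bdiag_props(1)[OF r AB] .
      show "psi r (phi (bdiag r (fst AB) (snd AB))) = AB"
        unfolding psi_def matof_phi[OF O] using bdiag_props(3,4)[OF r AB] by simp
    qed
    show "psi r ` Stab r \<subseteq> carrier ?D" using psiC by blast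
    show "(\<lambda>AB. phi (bdiag r (fst AB) (snd AB))) ` carrier ?D \<subseteq> Stab r"
    proof
      fix h assume "h \<in> (\<lambda>AB. phi (bdiag r (fst AB) (snd AB))) ` carrier ?D"
      then obtain AB where AB0: "AB \<in> carrier ?D" "h = phi (bdiag r (fst AB) (snd AB))" by blast
      hence AB: "fst AB \<in> carrier (orth_group r)" "snd AB \<in> carrier (orth_group (p - r))" unfolding carD by auto
      have O: "orthm (bdiag r (fst AB) (snd AB))" and b: "bd r (bdiag r (fst AB) (snd AB))"
        using bdiag_props(1,2)[OF r AB] by auto
      have hH: "h \<in> Hgrp" using phi_props(1)[OF O] AB0(2) by simp
      have "matof h = bdiag r (fst AB) (snd AB)" using matof_phi[OF O] AB0(2) by simp
      thus "h \<in> Stab r" using Stab_bd[OF r hH] b by simp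
    qed
  qed
  thus ?thesis using hom unfolding is_iso_def iso_def by blast
qed

end


theorem proposition5p28:
  fixes J :: "'z::euclidean_space \<Rightarrow> 'v::euclidean_space \<Rightarrow> 'v"
    and p :: nat
  assumes "DIM('z) mod 8 = 0"
    and "clifford_module J"
    and "sum_of_irreducibles J p"
  shows "\<exists>Orb :: nat \<Rightarrow> 'v set set.
           bij_betw Orb {0..p} (Lag_orbits J) \<and>
           (\<forall>r\<in>{0..p}. \<exists>H L0.
              subgroup H (Aut_group J) \<and>
              orth_group p \<cong> map_group H \<and>
              L0 \<in> Orb r \<and>
              Orb r = {h ` L0 | h. h \<in> H} \<and>
              map_group {h \<in> H. h ` L0 = L0} \<cong> DirProd (orth_group r) (orth_group (p - r)))"
proof -
  obtain e0 :: "nat \<Rightarrow> 'z" where e0: "bij_betw e0 {0..<card (Basis :: 'z set)} Basis"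
    using ex_bij_betw_nat_finite[OF finite_Basis[where 'a='z]] by blast
  have e: "bij_betw e0 {..<DIM('z)} Basis" using e0 by (simp add: atLeast0LessThan)
  define k where "k = DIM('z) div 8"
  have mk: "DIM('z) = 8 * k" unfolding k_def using assms(1) div_mult_mod_eq[of "DIM('z)" 8] by simp
  interpret C: cliff8 J e0 "DIM('z)" k
    by unfold_locales (use assms(2) e mk in auto)
  obtain xb where xb: "\<forall>i<p. xb i \<in> C.E" "\<forall>i<p. \<forall>j<p. xb i \<bullet> xb j = (if i = j then 1 else 0)"
    "span (xb ` {..<p}) = C.E" using C.E_basis[OF assms(3)] by blast
  interpret B: cliffB J e0 "DIM('z)" k p xb
    by unfold_locales (use xb in \<open>auto simp: ON_def\<close>)
  show ?thesis
  proof (intro exI[of _ B.Orb] conjI ballI)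
    show "bij_betw B.Orb {0..p} (Lag_orbits J)"
      unfolding bij_betw_def using B.Orb_inj B.orbits_eq by simp
    fix r assume r: "r \<in> {0..p}"
    hence rp: "r \<le> p" by simp
    show "\<exists>H L0. subgroup H (Aut_group J) \<and> orth_group p \<cong> map_group H \<and> L0 \<in> B.Orb r \<and>
              B.Orb r = {h ` L0 | h. h \<in> H} \<and>
              map_group {h \<in> H. h ` L0 = L0} \<cong> DirProd (orth_group r) (orth_group (p - r))"
    proof (intro exI[of _ B.Hgrp] exI[of _ "C.Lam (B.Ur r)"] conjI)
      show "subgroup B.Hgrp (Aut_group J)" by (rule B.H_subgroup)
      show "orth_group p \<cong> map_group B.Hgrp" by (rule is_isoI[OF B.phi_iso])
      show "C.Lam (B.Ur r) \<in> B.Orb r" by (rule B.L0_props(2)[OF rp])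
      show "B.Orb r = {h ` C.Lam (B.Ur r) | h. h \<in> B.Hgrp}" by (rule B.Orb_H[OF rp])
      show "map_group {h \<in> B.Hgrp. h ` C.Lam (B.Ur r) = C.Lam (B.Ur r)} \<cong> DirProd (orth_group r) (orth_group (p - r))"
        using B.stab_iso[OF rp] unfolding B.Stab_def .
    qed
  qed
qed


end
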